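(* Let $\mathbb F$ be a totally real algebraic number field with ring of integers $\mathcal O_{\mathbb F}$, and for each field embedding $\sigma:\mathbb F\to\mathbb R$ let an interval $[a_\sigma,b_\sigma]\subset\mathbb R$ be given. Let $m\ge 1$ and intervals $[s_1,t_1],\dots,[s_m,t_m]\subset\mathbb R$ be fixed. Let $P(x)\in\mathcal O_{\mathbb F}[x]$ be a nonzero polynomial and put $$\delta(\sigma)=\max_{x\in[a_\sigma,b_\sigma]}|P^\sigma(x)|\quad(\sigma:\mathbb F\to\mathbb R),$$ and suppose $\prod_\sigma\delta(\sigma)<1$. Let $\alpha$ be a totally real algebraic integer and let $\tau_1,\dots,\tau_m$ be distinct embeddings $\mathbb F(\alpha)\to\mathbb R$ such that $$s_i\le\tau_i(\alpha)\le t_i\ (i=1,\dots,m),\qquad a_{\tau|\mathbb F}\le\tau(\alpha)\le b_{\tau|\mathbb F}\ \text{ for every embedding }\tau:\mathbb F(\alpha)\to\mathbb R,\ \tau\ne\tau_1,\dots,\tau_m.$$ Put $\sigma_i=\tau_i|_{\mathbb F}$ and $a_i=\max_{x\in[s_i,t_i]}|P^{\sigma_i}(x)|$. If $P(\alpha)\neq 0$, then $$1\le[\mathbb F(\alpha):\mathbb F]\le\frac{\ln\prod_{i=1}^m a_i-\ln\prod_{i=1}^m\delta(\sigma_i)}{-\ln\prod_\sigma\delta(\sigma)}.$$ In particular no such $\alpha$ with $P(\alpha)\ne0$ exists if the right-hand side is $<1$.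
   Context: For a polynomial $P$ with coefficients in $\mathbb F$ and an embedding $\sigma:\mathbb F\to\mathbb R$, $P^\sigma$ denotes the real polynomial obtained by applying $\sigma$ to the coefficients of $P$. Products $\prod_\sigma$ run over all embeddings $\mathbb F\to\mathbb R$. *)

theory Defs
  imports "HOL-Analysis.Analysis" "HOL-Computational_Algebra.Polynomial"
begin

text \<open>All number fields are modelled as subfields of the complex numbers.\<close>

definition subfield_C :: "complex set \<Rightarrow> bool" where
  "subfield_C K \<longleftrightarrow> 0 \<in> K \<and> 1 \<in> K \<and>
     (\<forall>x\<in>K. \<forall>y\<in>K. x + y \<in> K \<and> x * y \<in> K) \<and>
     (\<forall>x\<in>K. - x \<in> K \<and> inverse x \<in> K)"

definition number_field :: "complex set \<Rightarrow> bool" where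
  "number_field K \<longleftrightarrow> subfield_C K \<and>
     (\<exists>B. finite B \<and> B \<subseteq> K \<and> K \<subseteq> {\<Sum>b\<in>B. of_rat (c b) * b | c. True})"

definition adjoin :: "complex set \<Rightarrow> complex \<Rightarrow> complex set" where
  "adjoin K \<alpha> = \<Inter> {L. subfield_C L \<and> K \<subseteq> L \<and> \<alpha> \<in> L}"

definition ext_degree :: "complex set \<Rightarrow> complex set \<Rightarrow> nat" where
  "ext_degree L K = (LEAST n. \<exists>b. (\<forall>i<n. b i \<in> L) \<and>
      L \<subseteq> {\<Sum>i<n. c i * b i | c. \<forall>i<n. c i \<in> K})"

text \<open>Field embeddings K -> C (extended by 0 outside K so that they form a finite set).\<close>
definition complex_embeddings :: "complex set \<Rightarrow> (complex \<Rightarrow> complex) set" where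
  "complex_embeddings K = {\<sigma>. (\<forall>x\<in>K. \<forall>y\<in>K. \<sigma> (x + y) = \<sigma> x + \<sigma> y \<and> \<sigma> (x * y) = \<sigma> x * \<sigma> y)
       \<and> \<sigma> 1 = 1 \<and> (\<forall>x. x \<notin> K \<longrightarrow> \<sigma> x = 0)}"

definition real_embeddings :: "complex set \<Rightarrow> (complex \<Rightarrow> real) set" where
  "real_embeddings K = {\<sigma>. (\<forall>x\<in>K. \<forall>y\<in>K. \<sigma> (x + y) = \<sigma> x + \<sigma> y \<and> \<sigma> (x * y) = \<sigma> x * \<sigma> y)
       \<and> \<sigma> 1 = 1 \<and> (\<forall>x. x \<notin> K \<longrightarrow> \<sigma> x = 0)}"

definition totally_real :: "complex set \<Rightarrow> bool" where
  "totally_real K \<longleftrightarrow> (\<forall>\<sigma>\<in>complex_embeddings K. \<forall>x\<in>K. \<sigma> x \<in> \<real>)"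

definition ring_of_integers :: "complex set \<Rightarrow> complex set" where
  "ring_of_integers K = {x\<in>K. algebraic_int x}"

definition totally_real_alg_int :: "complex \<Rightarrow> bool" where
  "totally_real_alg_int \<alpha> \<longleftrightarrow> algebraic_int \<alpha> \<and> totally_real (adjoin \<rat> \<alpha>)"

definition restrict_emb :: "(complex \<Rightarrow> real) \<Rightarrow> complex set \<Rightarrow> complex \<Rightarrow> real" where
  "restrict_emb \<tau> K = (\<lambda>x. if x \<in> K then \<tau> x else 0)"

definition max_abs_on :: "(complex \<Rightarrow> real) \<Rightarrow> complex poly \<Rightarrow> real \<Rightarrow> real \<Rightarrow> real" where
  "max_abs_on \<sigma> P u v = (SUP x\<in>{u..v}. \<bar>poly (map_poly \<sigma> P) x\<bar>)"

end

theory Submission imports Defs Jordan_Normal_Form.Char_Poly "HOL-Computational_Algebra.Fundamental_Theorem_Algebra" begin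


lemma eigen_alg_int:
  fixes A :: "complex mat" and x :: complex
  assumes A: "A \<in> carrier_mat n n" and Z: "\<And>i j. i < n \<Longrightarrow> j < n \<Longrightarrow> A $$ (i,j) \<in> \<int>"
    and v: "v \<in> carrier_vec n" "v \<noteq> 0\<^sub>v n" and ev: "A *\<^sub>v v = x \<cdot>\<^sub>v v"
  shows "algebraic_int x"
proof -
  define B :: "int mat" where "B = mat n n (\<lambda>ij. SOME k. A $$ ij = of_int k)"
  have AB: "A = map_mat of_int B"
  proof (rule eq_matI)
    fix i j assume ij: "i < dim_row (map_mat of_int B)" "j < dim_col (map_mat of_int B)"
    hence "i < n" "j < n" by (auto simp: B_def)
    then obtain k where "A $$ (i,j) = of_int k" using Z by (meson Ints_cases)
    hence "A $$ (i,j) = of_int (SOME k. A $$ (i,j) = of_int k)" by (rule someI)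
    thus "A $$ (i, j) = map_mat of_int B $$ (i, j)" using \<open>i<n\<close> \<open>j<n\<close> by (simp add: B_def)
  qed (use A in \<open>auto simp: B_def\<close>)
  have Bc: "B \<in> carrier_mat n n" by (simp add: B_def)
  have cp: "char_poly A = map_poly of_int (char_poly B)"
    unfolding AB by (rule of_int_hom.char_poly_hom[OF Bc])
  have "eigenvalue A x" unfolding eigenvalue_def eigenvector_def using A v ev by auto
  hence root: "poly (char_poly A) x = 0" using eigenvalue_root_char_poly[OF A] by simp
  from degree_monic_char_poly[OF A] have "lead_coeff (char_poly A) = 1" by simp
  moreover have "\<forall>i. coeff (char_poly A) i \<in> \<int>" unfolding cp by (simp add: coeff_map_poly)
  ultimately show ?thesis using root by (intro algebraic_int.intros) auto
qed

lemma alg_int_companion: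
  fixes x :: complex
  assumes "algebraic_int x"
  shows "\<exists>n A v. A \<in> carrier_mat n n \<and> (\<forall>i<n. \<forall>j<n. A $$ (i,j) \<in> \<int>) \<and>
     v \<in> carrier_vec n \<and> v \<noteq> 0\<^sub>v n \<and> A *\<^sub>v v = x \<cdot>\<^sub>v v"
proof -
  from assms obtain p where p: "lead_coeff p = 1" "\<forall>i. coeff p i \<in> \<int>" "poly p x = 0"
    by (auto simp: algebraic_int.simps)
  define n where "n = degree p"
  have n0: "n > 0"
  proof (rule ccontr)
    assume "\<not> n > 0" hence "degree p = 0" by (simp add: n_def)
    hence "poly p x = 1" using p(1) by (simp add: poly_altdef)
    thus False using p(3) by simp
  qed
  define A :: "complex mat" where "A = mat n n (\<lambda>(i,j). if i + 1 < n then (if j = i + 1 then 1 else 0) else - coeff p j)"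
  define v :: "complex vec" where "v = vec n (\<lambda>i. x ^ i)"
  have "A *\<^sub>v v = x \<cdot>\<^sub>v v"
  proof (rule eq_vecI)
    fix i assume "i < dim_vec (x \<cdot>\<^sub>v v)"
    hence i: "i < n" by (simp add: v_def)
    have "(A *\<^sub>v v) $ i = (\<Sum>j<n. A $$ (i,j) * x ^ j)"
      using i by (simp add: A_def v_def scalar_prod_def row_def lessThan_atLeast0)
    also have "\<dots> = x * x ^ i"
    proof (cases "i + 1 < n")
      case True
      hence "(\<Sum>j<n. A $$ (i,j) * x ^ j) = (\<Sum>j<n. if j = i + 1 then x ^ j else 0)"
        using i by (intro sum.cong) (auto simp: A_def)
      also have "\<dots> = x ^ (i+1)" using True by (simp add: sum.delta)
      finally show ?thesis by simp
    next
      case False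
      hence ii: "i = n - 1" using i by simp
      have "(\<Sum>j<n. A $$ (i,j) * x ^ j) = - (\<Sum>j<n. coeff p j * x ^ j)"
        using i False by (auto simp: A_def sum_negf)
      also have "(\<Sum>j<n. coeff p j * x ^ j) = - (x ^ n)"
      proof -
        have "0 = poly p x" using p by simp
        also have "\<dots> = (\<Sum>j\<le>n. coeff p j * x ^ j)" by (simp add: poly_altdef n_def)
        also have "\<dots> = (\<Sum>j<n. coeff p j * x ^ j) + x ^ n"
          using p(1) by (simp add: lessThan_Suc_atMost[symmetric] n_def)
        finally show ?thesis by (simp add: eq_neg_iff_add_eq_0)
      qed
      finally show ?thesis using ii n0 by (simp add: power_Suc[symmetric])
    qed
    finally show "(A *\<^sub>v v) $ i = (x \<cdot>\<^sub>v v) $ i" using i by (simp add: v_def)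
  qed (simp add: A_def v_def)
  moreover have "v \<noteq> 0\<^sub>v n"
  proof
    assume "v = 0\<^sub>v n" hence "v $ 0 = 0\<^sub>v n $ 0" by simp
    thus False using n0 by (simp add: v_def)
  qed
  moreover have "\<forall>i<n. \<forall>j<n. A $$ (i,j) \<in> \<int>" using p(2) by (auto simp: A_def)
  ultimately show ?thesis
    by (intro exI[of _ n] exI[of _ A] exI[of _ v]) (auto simp: A_def v_def)
qed



lemma sum_div_mod_split:
  fixes f :: "nat \<Rightarrow> nat \<Rightarrow> 'a::comm_monoid_add"
  shows "(\<Sum>j<n*m. f (j div m) (j mod m)) = (\<Sum>a<n. \<Sum>b<m. f a b)"
proof (induction n)
  case (Suc n)
  have S: "{..<Suc n * m} = {..<n*m} \<union> {n*m..<n*m+m}" by auto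
  have "(\<Sum>j<Suc n*m. f (j div m) (j mod m)) = (\<Sum>j\<in>{..<n*m} \<union> {n*m..<n*m+m}. f (j div m) (j mod m))"
    by (simp only: S)
  also have "\<dots> = (\<Sum>j<n*m. f (j div m) (j mod m)) + (\<Sum>j\<in>{n*m..<n*m+m}. f (j div m) (j mod m))"
    by (rule sum.union_disjoint) auto
  also have "(\<Sum>j\<in>{n*m..<n*m+m}. f (j div m) (j mod m)) = (\<Sum>b<m. f n b)"
  proof -
    have "(\<Sum>j\<in>{n*m..<n*m+m}. f (j div m) (j mod m)) = (\<Sum>b<m. f ((b + n*m) div m) ((b + n*m) mod m))"
      by (rule sum.reindex_bij_witness[of _ "\<lambda>b. b + n*m" "\<lambda>j. j - n*m"]) auto
    also have "\<dots> = (\<Sum>b<m. f n b)" by (intro sum.cong) auto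
    finally show ?thesis .
  qed
  finally show ?case using Suc by simp
qed simp

definition kron :: "nat \<Rightarrow> complex mat \<Rightarrow> nat \<Rightarrow> complex mat \<Rightarrow> complex mat" where
  "kron n A m B = mat (n*m) (n*m) (\<lambda>(i,j). A $$ (i div m, j div m) * B $$ (i mod m, j mod m))"

definition kronv :: "nat \<Rightarrow> complex vec \<Rightarrow> nat \<Rightarrow> complex vec \<Rightarrow> complex vec" where
  "kronv n u m v = vec (n*m) (\<lambda>i. u $ (i div m) * v $ (i mod m))"

lemma kron_eigen:
  assumes A: "A \<in> carrier_mat n n" and B: "B \<in> carrier_mat m m"
    and u: "u \<in> carrier_vec n" and v: "v \<in> carrier_vec m"
    and eu: "A *\<^sub>v u = x \<cdot>\<^sub>v u" and ev: "B *\<^sub>v v = y \<cdot>\<^sub>v v"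
  shows "kron n A m B *\<^sub>v kronv n u m v = (x*y) \<cdot>\<^sub>v kronv n u m v"
proof (rule eq_vecI)
  fix i assume "i < dim_vec ((x*y) \<cdot>\<^sub>v kronv n u m v)"
  hence i: "i < n*m" by (simp add: kronv_def)
  hence im: "i div m < n" "i mod m < m" using less_mult_imp_div_less by (auto, metis mod_less_divisor mult_0_right neq0_conv not_less0)
  have "(kron n A m B *\<^sub>v kronv n u m v) $ i = (\<Sum>j<n*m. A $$ (i div m, j div m) * B $$ (i mod m, j mod m) * (u $ (j div m) * v $ (j mod m)))"
    using i by (simp add: kron_def kronv_def scalar_prod_def row_def lessThan_atLeast0)
  also have "\<dots> = (\<Sum>a<n. \<Sum>b<m. A $$ (i div m, a) * B $$ (i mod m, b) * (u $ a * v $ b))"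
    by (rule sum_div_mod_split)
  also have "\<dots> = (\<Sum>a<n. A $$ (i div m, a) * u $ a) * (\<Sum>b<m. B $$ (i mod m, b) * v $ b)"
    by (simp add: sum_product mult_ac)
  also have "(\<Sum>a<n. A $$ (i div m, a) * u $ a) = x * u $ (i div m)"
  proof -
    have "(A *\<^sub>v u) $ (i div m) = (\<Sum>a<n. A $$ (i div m, a) * u $ a)"
      using A u im by (simp add: scalar_prod_def row_def lessThan_atLeast0)
    thus ?thesis using eu im u by simp
  qed
  also have "(\<Sum>b<m. B $$ (i mod m, b) * v $ b) = y * v $ (i mod m)"
  proof -
    have "(B *\<^sub>v v) $ (i mod m) = (\<Sum>b<m. B $$ (i mod m, b) * v $ b)"
      using B v im by (simp add: scalar_prod_def row_def lessThan_atLeast0)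
    thus ?thesis using ev im v by simp
  qed
  finally show "(kron n A m B *\<^sub>v kronv n u m v) $ i = ((x*y) \<cdot>\<^sub>v kronv n u m v) $ i"
    using i by (simp add: kronv_def)
qed (simp add: kron_def kronv_def)

lemma kronv_nz:
  assumes u: "u \<in> carrier_vec n" "u \<noteq> 0\<^sub>v n" and v: "v \<in> carrier_vec m" "v \<noteq> 0\<^sub>v m"
  shows "kronv n u m v \<noteq> 0\<^sub>v (n*m)"
proof -
  obtain a where a: "a < n" "u $ a \<noteq> 0" using u by (metis eq_vecI carrier_vecD index_zero_vec(1,2))
  obtain b where b: "b < m" "v $ b \<noteq> 0" using v by (metis eq_vecI carrier_vecD index_zero_vec(1,2))
  have lt: "a*m + b < n*m"
  proof -
    have "a*m + b < a*m + m" using b by simp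
    also have "\<dots> = Suc a * m" by simp
    also have "\<dots> \<le> n * m" using a by (intro mult_right_mono) auto
    finally show ?thesis .
  qed
  have "(a*m+b) div m = a" "(a*m+b) mod m = b" using b by auto
  hence "kronv n u m v $ (a*m+b) \<noteq> 0" using lt a b by (simp add: kronv_def)
  thus ?thesis using lt by auto
qed

lemma alg_int_mult:
  fixes x y :: complex
  assumes "algebraic_int x" "algebraic_int y"
  shows "algebraic_int (x*y)" "algebraic_int (x+y)"
proof -
  obtain n A u where Au: "A \<in> carrier_mat n n" "\<forall>i<n. \<forall>j<n. A $$ (i,j) \<in> \<int>"
     "u \<in> carrier_vec n" "u \<noteq> 0\<^sub>v n" "A *\<^sub>v u = x \<cdot>\<^sub>v u"
    using alg_int_companion[OF assms(1)] by blast
  obtain m B v where Bv: "B \<in> carrier_mat m m" "\<forall>i<m. \<forall>j<m. B $$ (i,j) \<in> \<int>"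
     "v \<in> carrier_vec m" "v \<noteq> 0\<^sub>v m" "B *\<^sub>v v = y \<cdot>\<^sub>v v"
    using alg_int_companion[OF assms(2)] by blast
  have w: "kronv n u m v \<in> carrier_vec (n*m)" "kronv n u m v \<noteq> 0\<^sub>v (n*m)"
    using kronv_nz[OF Au(3,4) Bv(3,4)] by (auto simp: kronv_def)
  have divs: "\<And>i. i < n*m \<Longrightarrow> i div m < n \<and> i mod m < m"
    by (metis less_mult_imp_div_less mod_less_divisor mult_0_right neq0_conv not_less0)
  have K: "\<And>A B. A \<in> carrier_mat n n \<Longrightarrow> B \<in> carrier_mat m m \<Longrightarrow> (\<forall>i<n. \<forall>j<n. A $$ (i,j) \<in> \<int>) \<Longrightarrow>
       (\<forall>i<m. \<forall>j<m. B $$ (i,j) \<in> \<int>) \<Longrightarrow> (\<And>i j. i < n*m \<Longrightarrow> j < n*m \<Longrightarrow> kron n A m B $$ (i,j) \<in> \<int>)"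
    using divs by (auto simp: kron_def)
  have carr: "kron n A m B \<in> carrier_mat (n*m) (n*m)" by (simp add: kron_def)
  show "algebraic_int (x*y)"
    by (rule eigen_alg_int[OF carr K[OF Au(1) Bv(1) Au(2) Bv(2)] w(1,2) kron_eigen[OF Au(1) Bv(1) Au(3) Bv(3) Au(5) Bv(5)]])
  have I1: "1\<^sub>m m *\<^sub>v v = 1 \<cdot>\<^sub>v v" using Bv(3) by simp
  have I2: "1\<^sub>m n *\<^sub>v u = 1 \<cdot>\<^sub>v u" using Au(3) by simp
  have e1: "kron n A m (1\<^sub>m m) *\<^sub>v kronv n u m v = x \<cdot>\<^sub>v kronv n u m v"
    using kron_eigen[OF Au(1) _ Au(3) Bv(3) Au(5) I1] by simp
  have e2: "kron n (1\<^sub>m n) m B *\<^sub>v kronv n u m v = y \<cdot>\<^sub>v kronv n u m v"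
    using kron_eigen[OF _ Bv(1) Au(3) Bv(3) I2 Bv(5)] by simp
  have "(kron n A m (1\<^sub>m m) + kron n (1\<^sub>m n) m B) *\<^sub>v kronv n u m v = (x+y) \<cdot>\<^sub>v kronv n u m v"
    by (subst add_mult_distrib_mat_vec[of _ "n*m" "n*m"]) (use w e1 e2 in \<open>auto simp: kron_def add_smult_distrib_vec\<close>)
  moreover have "\<And>i j. i < n*m \<Longrightarrow> j < n*m \<Longrightarrow> (kron n A m (1\<^sub>m m) + kron n (1\<^sub>m n) m B) $$ (i,j) \<in> \<int>"
  proof -
    fix i j assume ij: "i < n*m" "j < n*m"
    have "kron n A m (1\<^sub>m m) $$ (i,j) \<in> \<int>" by (rule K[OF Au(1) _ Au(2) _ ij]) auto
    moreover have "kron n (1\<^sub>m n) m B $$ (i,j) \<in> \<int>" by (rule K[OF _ Bv(1) _ Bv(2) ij]) auto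
    ultimately show "(kron n A m (1\<^sub>m m) + kron n (1\<^sub>m n) m B) $$ (i,j) \<in> \<int>"
      using ij by (simp add: kron_def)
  qed
  ultimately show "algebraic_int (x+y)"
    by (intro eigen_alg_int[of _ "n*m", OF _ _ w(1,2)]) (auto simp: kron_def)
qed

lemma alg_int_sum: "finite S \<Longrightarrow> (\<And>i. i \<in> S \<Longrightarrow> algebraic_int (f i :: complex)) \<Longrightarrow> algebraic_int (sum f S)"
  by (induction S rule: finite_induct) (auto intro: alg_int_mult)
lemma alg_int_prod: "finite S \<Longrightarrow> (\<And>i. i \<in> S \<Longrightarrow> algebraic_int (f i :: complex)) \<Longrightarrow> algebraic_int (prod f S)"
  by (induction S rule: finite_induct) (auto intro: alg_int_mult)



section \<open>Subfields\<close>

context fixes L :: "complex set" assumes sf: "subfield_C L" begin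

lemma sf_0: "0 \<in> L" and sf_1: "1 \<in> L"
  and sf_add: "x \<in> L \<Longrightarrow> y \<in> L \<Longrightarrow> x + y \<in> L"
  and sf_mult: "x \<in> L \<Longrightarrow> y \<in> L \<Longrightarrow> x * y \<in> L"
  and sf_uminus: "x \<in> L \<Longrightarrow> - x \<in> L"
  and sf_inverse: "x \<in> L \<Longrightarrow> inverse x \<in> L"
  using sf by (auto simp: subfield_C_def)

lemma sf_diff: "x \<in> L \<Longrightarrow> y \<in> L \<Longrightarrow> x - y \<in> L"
  using sf_add[of x "-y"] sf_uminus[of y] by simp

lemma sf_divide: "x \<in> L \<Longrightarrow> y \<in> L \<Longrightarrow> x / y \<in> L"
  using sf_mult[of x "inverse y"] sf_inverse[of y] by (simp add: divide_inverse)

lemma sf_sum: "(\<And>i. i \<in> S \<Longrightarrow> f i \<in> L) \<Longrightarrow> sum f S \<in> L"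
  by (induction S rule: infinite_finite_induct) (auto intro: sf_add sf_0)

lemma sf_prod: "(\<And>i. i \<in> S \<Longrightarrow> f i \<in> L) \<Longrightarrow> prod f S \<in> L"
  by (induction S rule: infinite_finite_induct) (auto intro: sf_mult sf_1)

lemma sf_power: "x \<in> L \<Longrightarrow> x ^ n \<in> L"
  by (induction n) (auto intro: sf_mult sf_1)

lemma sf_of_nat: "of_nat n \<in> L"
  by (induction n) (auto intro: sf_add sf_0 sf_1)

lemma sf_of_int: "of_int n \<in> L"
  by (cases n rule: int_cases) (auto intro: sf_uminus sf_of_nat simp del: of_nat_Suc)

lemma sf_Rats: "x \<in> \<rat> \<Longrightarrow> x \<in> L"
  by (erule Rats_cases') (auto intro!: sf_divide sf_of_int)

lemma sf_signof: "of_int (sign p) \<in> L"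
  by (rule sf_of_int)

end

section \<open>Embeddings\<close>

context fixes L :: "complex set" and \<sigma> :: "complex \<Rightarrow> complex"
  assumes sf: "subfield_C L" and emb: "\<sigma> \<in> complex_embeddings L" begin

lemma emb_add: "x \<in> L \<Longrightarrow> y \<in> L \<Longrightarrow> \<sigma> (x + y) = \<sigma> x + \<sigma> y"
  and emb_mult: "x \<in> L \<Longrightarrow> y \<in> L \<Longrightarrow> \<sigma> (x * y) = \<sigma> x * \<sigma> y"
  and emb_1: "\<sigma> 1 = 1"
  and emb_out: "x \<notin> L \<Longrightarrow> \<sigma> x = 0"
  using emb by (auto simp: complex_embeddings_def)

lemma emb_0: "\<sigma> 0 = 0"
  using emb_add[of 0 0] sf_0[OF sf] by simp

lemma emb_uminus: "x \<in> L \<Longrightarrow> \<sigma> (- x) = - \<sigma> x"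
proof -
  assume x: "x \<in> L"
  have "\<sigma> x + \<sigma> (-x) = 0" using emb_add[of x "-x"] sf_uminus[OF sf, of x] emb_0 x by simp
  thus ?thesis by (metis minus_unique)
qed

lemma emb_diff: "x \<in> L \<Longrightarrow> y \<in> L \<Longrightarrow> \<sigma> (x - y) = \<sigma> x - \<sigma> y"
  using emb_add[of x "-y"] emb_uminus[of y] sf_uminus[OF sf, of y] by simp

lemma emb_inverse: "x \<in> L \<Longrightarrow> \<sigma> (inverse x) = inverse (\<sigma> x)"
proof (cases "x = 0")
  case False
  assume x: "x \<in> L"
  have "\<sigma> x * \<sigma> (inverse x) = 1"
    using emb_mult[OF x sf_inverse[OF sf x]] False emb_1 by simp
  thus ?thesis by (simp add: inverse_unique)
qed (simp add: emb_0)

lemma emb_nz: "x \<in> L \<Longrightarrow> x \<noteq> 0 \<Longrightarrow> \<sigma> x \<noteq> 0"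
  using emb_mult[of x "inverse x"] sf_inverse[OF sf, of x] emb_1 by force

lemma emb_eq_0_iff: "x \<in> L \<Longrightarrow> \<sigma> x = 0 \<longleftrightarrow> x = 0"
  using emb_nz emb_0 by auto

lemma emb_inj: "x \<in> L \<Longrightarrow> y \<in> L \<Longrightarrow> \<sigma> x = \<sigma> y \<Longrightarrow> x = y"
  using emb_diff[of x y] emb_eq_0_iff[of "x - y"] sf_diff[OF sf, of x y] by simp

lemma emb_divide: "x \<in> L \<Longrightarrow> y \<in> L \<Longrightarrow> \<sigma> (x / y) = \<sigma> x / \<sigma> y"
  using emb_mult[of x "inverse y"] emb_inverse[of y] sf_inverse[OF sf, of y] by (simp add: divide_inverse)

lemma emb_sum: "(\<And>i. i \<in> S \<Longrightarrow> f i \<in> L) \<Longrightarrow> \<sigma> (sum f S) = (\<Sum>i\<in>S. \<sigma> (f i))"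
  by (induction S rule: infinite_finite_induct) (auto simp: emb_0 emb_add sf_sum[OF sf])

lemma emb_prod: "(\<And>i. i \<in> S \<Longrightarrow> f i \<in> L) \<Longrightarrow> \<sigma> (prod f S) = (\<Prod>i\<in>S. \<sigma> (f i))"
  by (induction S rule: infinite_finite_induct) (auto simp: emb_1 emb_mult sf_prod[OF sf])

lemma emb_power: "x \<in> L \<Longrightarrow> \<sigma> (x ^ n) = \<sigma> x ^ n"
  by (induction n) (auto simp: emb_1 emb_mult sf_power[OF sf])

lemma emb_of_nat: "\<sigma> (of_nat n) = of_nat n"
  by (induction n) (auto simp: emb_0 emb_1 emb_add sf_of_nat[OF sf] sf_1[OF sf])

lemma emb_of_int: "\<sigma> (of_int n) = of_int n"
  by (cases n rule: int_cases) (auto simp: emb_uminus emb_of_nat sf_of_nat[OF sf] simp del: of_nat_Suc)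

lemma emb_Rats: "x \<in> \<rat> \<Longrightarrow> \<sigma> x = x"
  by (erule Rats_cases') (auto simp: emb_divide emb_of_int sf_of_int[OF sf])

end

section \<open>Polynomials with coefficients in L\<close>

definition polyL :: "complex set \<Rightarrow> complex poly \<Rightarrow> bool" where
  "polyL L p \<longleftrightarrow> (\<forall>i. coeff p i \<in> L)"

lemma polyL_pCons: "polyL L (pCons a p) \<longleftrightarrow> a \<in> L \<and> polyL L p"
  by (auto simp: polyL_def coeff_pCons split: nat.splits)

lemma polyL_mono: "L \<subseteq> M \<Longrightarrow> polyL L p \<Longrightarrow> polyL M p"
  by (auto simp: polyL_def)

context fixes L :: "complex set" assumes sf: "subfield_C L" begin

lemma polyL_0: "polyL L 0" and polyL_1: "polyL L 1"
  using sf_0[OF sf] sf_1[OF sf] by (auto simp: polyL_def coeff_1)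

lemma polyL_add: "polyL L p \<Longrightarrow> polyL L q \<Longrightarrow> polyL L (p + q)"
  and polyL_diff: "polyL L p \<Longrightarrow> polyL L q \<Longrightarrow> polyL L (p - q)"
  and polyL_uminus: "polyL L p \<Longrightarrow> polyL L (- p)"
  using sf by (auto simp: polyL_def intro: sf_add sf_diff sf_uminus)

lemma polyL_mult: "polyL L p \<Longrightarrow> polyL L q \<Longrightarrow> polyL L (p * q)"
  by (auto simp: polyL_def coeff_mult intro!: sf_sum[OF sf] sf_mult[OF sf])

lemma polyL_smult: "c \<in> L \<Longrightarrow> polyL L p \<Longrightarrow> polyL L (Polynomial.smult c p)"
  by (auto simp: polyL_def intro!: sf_mult[OF sf])

lemma polyL_monom: "c \<in> L \<Longrightarrow> polyL L (monom c n)"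
  by (auto simp: polyL_def coeff_monom sf_0[OF sf])

lemma polyL_const: "c \<in> L \<Longrightarrow> polyL L [:c:]"
  by (auto simp: polyL_def coeff_pCons sf_0[OF sf] split: nat.splits)


lemma polyL_power: "polyL L p \<Longrightarrow> polyL L (p ^ n)"
  by (induction n) (auto intro: polyL_mult polyL_1)

lemma polyL_x: "polyL L [:0,1:]"
  by (auto simp: polyL_def coeff_pCons sf_0[OF sf] sf_1[OF sf] split: nat.splits)

lemma polyL_pderiv: "polyL L p \<Longrightarrow> polyL L (pderiv p)"
  by (auto simp: polyL_def coeff_pderiv simp del: of_nat_Suc intro!: sf_mult[OF sf] sf_of_nat[OF sf])

lemma polyL_sum: "(\<And>i. i \<in> S \<Longrightarrow> polyL L (f i)) \<Longrightarrow> polyL L (sum f S)"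
  by (induction S rule: infinite_finite_induct) (auto intro: polyL_add polyL_0)

lemma polyL_poly: "polyL L p \<Longrightarrow> x \<in> L \<Longrightarrow> poly p x \<in> L"
  by (induction p) (auto simp: polyL_pCons sf_0[OF sf] intro!: sf_add[OF sf] sf_mult[OF sf])


end

context fixes L :: "complex set" and \<sigma> :: "complex \<Rightarrow> complex"
  assumes sf: "subfield_C L" and emb: "\<sigma> \<in> complex_embeddings L" begin

lemma coeff_map_emb: "coeff (map_poly \<sigma> p) i = \<sigma> (coeff p i)"
  by (rule coeff_map_poly) (rule emb_0[OF sf emb])

lemma map_emb_add: "polyL L p \<Longrightarrow> polyL L q \<Longrightarrow> map_poly \<sigma> (p + q) = map_poly \<sigma> p + map_poly \<sigma> q"
  by (rule poly_eqI) (simp add: coeff_map_emb polyL_def emb_add[OF sf emb])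

lemma map_emb_diff: "polyL L p \<Longrightarrow> polyL L q \<Longrightarrow> map_poly \<sigma> (p - q) = map_poly \<sigma> p - map_poly \<sigma> q"
  by (rule poly_eqI) (simp add: coeff_map_emb polyL_def emb_diff[OF sf emb])

lemma map_emb_mult: "polyL L p \<Longrightarrow> polyL L q \<Longrightarrow> map_poly \<sigma> (p * q) = map_poly \<sigma> p * map_poly \<sigma> q"
  by (rule poly_eqI) (simp add: coeff_map_emb coeff_mult polyL_def emb_sum[OF sf emb] emb_mult[OF sf emb] sf_mult[OF sf])

lemma map_emb_smult: "c \<in> L \<Longrightarrow> polyL L p \<Longrightarrow> map_poly \<sigma> (Polynomial.smult c p) = Polynomial.smult (\<sigma> c) (map_poly \<sigma> p)"
  by (rule poly_eqI) (simp add: coeff_map_emb polyL_def emb_mult[OF sf emb])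

lemma map_emb_monom: "map_poly \<sigma> (monom c n) = monom (\<sigma> c) n"
  by (rule poly_eqI) (simp add: coeff_map_emb coeff_monom emb_0[OF sf emb])

lemma map_emb_const: "map_poly \<sigma> [:c:] = [:\<sigma> c:]"
  by (rule poly_eqI) (simp add: coeff_map_emb coeff_pCons emb_0[OF sf emb] split: nat.splits)

lemma map_emb_x: "map_poly \<sigma> [:0,1:] = [:0,1:]"
  by (rule poly_eqI) (simp add: coeff_map_emb coeff_pCons emb_0[OF sf emb] emb_1[OF sf emb] split: nat.splits)

lemma map_emb_power: "polyL L p \<Longrightarrow> map_poly \<sigma> (p ^ n) = map_poly \<sigma> p ^ n"
  by (induction n) (auto simp: map_emb_mult polyL_power[OF sf] emb_1[OF sf emb])

lemma map_emb_pderiv: "polyL L p \<Longrightarrow> map_poly \<sigma> (pderiv p) = pderiv (map_poly \<sigma> p)"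
  by (rule poly_eqI) (simp add: coeff_map_emb coeff_pderiv polyL_def emb_mult[OF sf emb] sf_of_nat[OF sf] emb_of_nat[OF sf emb] del: of_nat_Suc)

lemma degree_map_emb: "polyL L p \<Longrightarrow> degree (map_poly \<sigma> p) = degree p"
proof -
  assume p: "polyL L p"
  have "\<forall>i. coeff (map_poly \<sigma> p) i = 0 \<longleftrightarrow> coeff p i = 0"
    using p by (simp add: coeff_map_emb polyL_def emb_eq_0_iff[OF sf emb])
  hence "\<forall>i. (coeff (map_poly \<sigma> p) i \<noteq> 0) = (coeff p i \<noteq> 0)" by blast
  thus ?thesis unfolding degree_def by simp
qed

lemma lead_coeff_map_emb: "polyL L p \<Longrightarrow> lead_coeff (map_poly \<sigma> p) = \<sigma> (lead_coeff p)"
  by (simp add: degree_map_emb coeff_map_emb)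

lemma map_emb_eq_0_iff: "polyL L p \<Longrightarrow> map_poly \<sigma> p = 0 \<longleftrightarrow> p = 0"
  by (metis coeff_map_emb emb_eq_0_iff[OF sf emb] lead_coeff_map_emb leading_coeff_0_iff polyL_def)

end

lemma emb_poly:
  assumes sf: "subfield_C M" and emb: "\<rho> \<in> complex_embeddings M"
    and LM: "L \<subseteq> M" and p: "polyL L p" and x: "x \<in> M"
  shows "\<rho> (poly p x) = poly (map_poly \<rho> p) (\<rho> x)"
  using p
proof (induction p)
  case (pCons a p)
  hence a: "a \<in> M" and pp: "polyL L p" using LM by (auto simp: polyL_pCons)
  have pM: "poly p x \<in> M" using polyL_poly[OF sf polyL_mono[OF LM pp] x] .
  have mp: "map_poly \<rho> (pCons a p) = pCons (\<rho> a) (map_poly \<rho> p)"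
    by (rule Polynomial.map_poly_pCons) (rule emb_0[OF sf emb])
  show ?case
    using pCons.IH[OF pp] a pM x mp
    by (simp add: map_poly_pCons emb_0[OF sf emb] emb_add[OF sf emb] emb_mult[OF sf emb] sf_mult[OF sf])
qed (simp add: emb_0[OF sf emb])



lemma lin_dep:
  assumes sf: "subfield_C L"
  shows "finite J \<Longrightarrow> card J > n \<Longrightarrow> (\<forall>j\<in>J. \<forall>k<n. a j k \<in> L) \<Longrightarrow>
    \<exists>c. (\<forall>j\<in>J. c j \<in> L) \<and> (\<exists>j\<in>J. c j \<noteq> 0) \<and> (\<forall>k<n. (\<Sum>j\<in>J. c j * a j k) = 0)"
proof (induction n arbitrary: J a)
  case 0
  then obtain j0 where j0: "j0 \<in> J" by (metis card.empty ex_in_conv less_irrefl)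
  have "\<forall>j\<in>J. (if j = j0 then 1 else 0) \<in> L" using sf_0[OF sf] sf_1[OF sf] by simp
  moreover have "\<exists>j\<in>J. (if j = j0 then 1 else 0::complex) \<noteq> 0" using j0 by auto
  ultimately show ?case by (intro exI[of _ "\<lambda>j. if j = j0 then 1 else 0"]) simp
next
  case (Suc n)
  show ?case
  proof (cases "\<forall>j\<in>J. a j n = 0")
    case True
    have cn: "card J > n" using Suc.prems(2) by simp
    have aL: "\<forall>j\<in>J. \<forall>k<n. a j k \<in> L" using Suc.prems(3) by simp
    from Suc.IH[OF Suc.prems(1) cn aL] obtain c where c: "\<forall>j\<in>J. c j \<in> L" "\<exists>j\<in>J. c j \<noteq> 0"
      "\<forall>k<n. (\<Sum>j\<in>J. c j * a j k) = 0" by blast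
    have "\<forall>k<Suc n. (\<Sum>j\<in>J. c j * a j k) = 0"
    proof (intro allI impI)
      fix k assume k: "k < Suc n"
      show "(\<Sum>j\<in>J. c j * a j k) = 0"
      proof (cases "k < n")
        case True thus ?thesis using c(3) by blast
      next
        case False hence "k = n" using k by simp
        thus ?thesis using True by simp
      qed
    qed
    thus ?thesis using c(1,2) by blast
  next
    case False
    then obtain j0 where j0: "j0 \<in> J" "a j0 n \<noteq> 0" by blast
    define J' where "J' = J - {j0}"
    define a' where "a' j k = a j k - a j n / a j0 n * a j0 k" for j k
    have fJ': "finite J'" using Suc.prems(1) by (simp add: J'_def)
    have cJ': "card J' > n" using Suc.prems(1,2) j0(1) unfolding J'_def by (simp add: card_Diff_singleton)
    have aL: "\<forall>j\<in>J'. \<forall>k<n. a' j k \<in> L"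
    proof (intro ballI allI impI)
      fix j k assume j: "j \<in> J'" and k: "k < n"
      have "j \<in> J" using j by (simp add: J'_def)
      hence "a j k \<in> L" "a j n \<in> L" "a j0 n \<in> L" "a j0 k \<in> L" using Suc.prems(3) j0(1) k by auto
      thus "a' j k \<in> L" unfolding a'_def by (intro sf_diff[OF sf] sf_mult[OF sf] sf_divide[OF sf])
    qed
    from Suc.IH[OF fJ' cJ' aL] obtain c' where c': "\<forall>j\<in>J'. c' j \<in> L" "\<exists>j\<in>J'. c' j \<noteq> 0"
      "\<forall>k<n. (\<Sum>j\<in>J'. c' j * a' j k) = 0" by blast
    define s where "s = (\<Sum>i\<in>J'. c' i * a i n)"
    define c where "c j = (if j = j0 then - s / a j0 n else c' j)" for j
    have key: "(\<Sum>j\<in>J. c j * a j k) = (\<Sum>j\<in>J'. c' j * a' j k)" for k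
    proof -
      have h0: "(\<Sum>j\<in>J. c j * a j k) = c j0 * a j0 k + (\<Sum>j\<in>J'. c j * a j k)"
        unfolding J'_def by (rule sum.remove[OF Suc.prems(1) j0(1)])
      have h1: "(\<Sum>j\<in>J'. c j * a j k) = (\<Sum>j\<in>J'. c' j * a j k)"
        by (intro sum.cong) (auto simp: c_def J'_def)
      have h2: "(\<Sum>j\<in>J'. c' j * a' j k) = (\<Sum>j\<in>J'. c' j * a j k - c' j * a j n * (a j0 k / a j0 n))"
        unfolding a'_def by (intro sum.cong refl) (simp add: field_simps)
      have h3: "(\<Sum>j\<in>J'. c' j * a j k - c' j * a j n * (a j0 k / a j0 n)) = (\<Sum>j\<in>J'. c' j * a j k) - s * (a j0 k / a j0 n)"
        unfolding s_def by (simp add: sum_subtractf sum_distrib_right sum_divide_distrib)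
      have h4: "c j0 * a j0 k = - s * (a j0 k / a j0 n)" by (simp add: c_def)
      show ?thesis unfolding h0 h1 h2 h3 h4 by simp
    qed
    have "\<forall>k<Suc n. (\<Sum>j\<in>J. c j * a j k) = 0"
    proof (intro allI impI)
      fix k assume "k < Suc n"
      show "(\<Sum>j\<in>J. c j * a j k) = 0"
      proof (cases "k < n")
        case True thus ?thesis using key c'(3) by simp
      next
        case False
        hence "k = n" using \<open>k < Suc n\<close> by simp
        have "\<And>j. a' j n = 0" using j0(2) by (simp add: a'_def)
        thus ?thesis unfolding key \<open>k = n\<close> by simp
      qed
    qed
    moreover have "\<forall>j\<in>J. c j \<in> L"
    proof
      fix j assume j: "j \<in> J"
      have sL: "s \<in> L" unfolding s_def
        using c'(1) Suc.prems(3) by (intro sf_sum[OF sf] sf_mult[OF sf]) (auto simp: J'_def)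
      have "a j0 n \<in> L" using Suc.prems(3) j0(1) by simp
      thus "c j \<in> L" using j c'(1) sL unfolding c_def J'_def
        by (cases "j = j0") (simp_all add: sf_divide[OF sf] sf_uminus[OF sf])
    qed
    moreover have "\<exists>j\<in>J. c j \<noteq> 0" using c'(2) unfolding c_def J'_def by auto
    ultimately show ?thesis by blast
  qed
qed

lemma poly_as_sum_less:
  fixes q :: "'a::comm_semiring_1 poly"
  assumes "q = 0 \<or> degree q < e"
  shows "poly q x = (\<Sum>k<e. coeff q k * x ^ k)"
proof (cases "q = 0")
  case False
  hence d: "degree q < e" using assms by simp
  have "poly q x = (\<Sum>k\<le>degree q. coeff q k * x ^ k)" by (simp add: poly_altdef)
  also have "\<dots> = (\<Sum>k<e. coeff q k * x ^ k)"
  proof (rule sum.mono_neutral_left)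
    show "\<forall>i\<in>{..<e} - {..degree q}. coeff q i * x ^ i = 0" by (auto simp: coeff_eq_0)
  qed (use d in auto)
  finally show ?thesis .
qed simp

lemma card_roots_sqfree:
  fixes p :: "complex poly"
  assumes "p \<noteq> 0" "\<forall>a. \<not> (poly p a = 0 \<and> poly (pderiv p) a = 0)"
  shows "card {x. poly p x = 0} = degree p"
  using assms
proof (induction "degree p" arbitrary: p rule: less_induct)
  case less
  show ?case
  proof (cases "degree p = 0")
    case True
    then obtain c where "p = [:c:]" by (metis degree_eq_zeroE)
    with less.prems True show ?thesis by simp
  next
    case False
    have "\<not> constant (poly p)" using False constant_degree[of p] by simp
    then obtain r where r: "poly p r = 0"
      using fundamental_theorem_of_algebra by blast
    then obtain q where q: "p = [:-r,1:] * q" by (metis poly_eq_0_iff_dvd dvdE)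
    have q0: "q \<noteq> 0" using less.prems q by auto
    have dpq: "degree p = Suc (degree q)"
    proof -
      have "degree ([:-r,1:] * q) = degree [:-r,1:] + degree q" by (rule degree_mult_eq) (use q0 in auto)
      thus ?thesis using q by simp
    qed
    hence dq: "degree q < degree p" by simp
    have pd0: "pderiv p = [:-r,1:] * pderiv q + q * pderiv [:-r,1:]" by (simp only: q pderiv_mult)
    have "pderiv [:-r,1:] = 1" by (simp add: pderiv_pCons)
    hence pd: "pderiv p = q + [:-r,1:] * pderiv q" using pd0 by simp
    have qr: "poly q r \<noteq> 0" using less.prems(2) r pd by (auto)
    have sq: "\<forall>a. \<not> (poly q a = 0 \<and> poly (pderiv q) a = 0)"
    proof (intro allI notI)
      fix a assume "poly q a = 0 \<and> poly (pderiv q) a = 0"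
      hence "poly p a = 0 \<and> poly (pderiv p) a = 0" using q pd by simp
      thus False using less.prems(2) by blast
    qed
    have "{x. poly p x = 0} = insert r {x. poly q x = 0}" using q r by auto
    hence "card {x. poly p x = 0} = Suc (card {x. poly q x = 0})"
      using qr poly_roots_finite[OF q0] by simp
    also have "card {x. poly q x = 0} = degree q" using less.hyps[OF dq q0 sq] .
    also have "Suc (degree q) = degree p" using dpq by simp
    finally show ?thesis .
  qed
qed



definition Mg :: "complex poly \<Rightarrow> complex poly \<Rightarrow> complex mat" where
  "Mg p g = mat (degree p) (degree p) (\<lambda>(j,k). coeff ((monom 1 j * g) mod p) k)"

lemma poly_mod_root: "poly p r = 0 \<Longrightarrow> poly (q mod p) r = poly q (r::complex)"
proof -
  assume "poly p r = 0"
  have "poly q r = poly (q div p * p + q mod p) r" by (simp only: div_mult_mod_eq)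
  also have "\<dots> = poly (q mod p) r" unfolding poly_add poly_mult using \<open>poly p r = 0\<close> by simp
  finally show ?thesis by (rule sym)
qed

lemma det_mat_diag: "Determinant.det (mat_diag n f) = (\<Prod>i<n. f i)"
proof -
  have "Determinant.det (mat_diag n f) = prod_list (diag_mat (mat_diag n f))"
    by (rule det_upper_triangular[of _ n]) (auto simp: mat_diag_def)
  also have "\<dots> = (\<Prod>i = 0..<n. mat_diag n f $$ (i,i))" by (simp add: prod_list_diag_prod mat_diag_def)
  also have "\<dots> = (\<Prod>i<n. f i)" by (simp add: mat_diag_def atLeast0LessThan)
  finally show ?thesis .
qed

lemma det_Mg:
  fixes p g :: "complex poly"
  assumes p0: "p \<noteq> 0" and card: "card {x. poly p x = 0} = degree p"
  shows "Determinant.det (Mg p g) = (\<Prod>r\<in>{x. poly p x = 0}. poly g r)"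
proof -
  define R where "R = {x. poly p x = 0}"
  define e where "e = degree p"
  have fR: "finite R" unfolding R_def using poly_roots_finite[OF p0] .
  obtain rr where rr: "bij_betw rr {0..<e} R" using ex_bij_betw_nat_finite[OF fR] card
    unfolding R_def e_def by metis
  have rrR: "\<And>i. i < e \<Longrightarrow> poly p (rr i) = 0" using rr unfolding bij_betw_def R_def by auto
  define V where "V = mat e e (\<lambda>(k,i). rr i ^ k)"
  define D where "D = mat_diag e (\<lambda>i. poly g (rr i))"
  have Mc: "Mg p g \<in> carrier_mat e e" by (simp add: Mg_def e_def)
  have Vc: "V \<in> carrier_mat e e" by (simp add: V_def)
  have Dc: "D \<in> carrier_mat e e" by (simp add: D_def)
  have MV: "Mg p g * V = V * D"
  proof (rule eq_matI)
    fix j i assume j: "j < dim_row (V * D)" and i: "i < dim_col (V * D)"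
    hence ji: "j < e" "i < e" using Vc Dc by auto
    have "(Mg p g * V) $$ (j,i) = (\<Sum>k<e. coeff ((monom 1 j * g) mod p) k * rr i ^ k)"
      using ji by (simp add: Mg_def V_def e_def scalar_prod_def row_def col_def atLeast0LessThan)
    also have "\<dots> = poly ((monom 1 j * g) mod p) (rr i)"
      by (rule poly_as_sum_less[symmetric]) (use degree_mod_less[OF p0] in \<open>auto simp: e_def\<close>)
    also have "\<dots> = rr i ^ j * poly g (rr i)"
      using poly_mod_root[OF rrR[OF ji(2)]] by (simp add: poly_monom)
    also have "\<dots> = (V * D) $$ (j,i)"
      unfolding D_def mat_diag_mult_right[OF Vc] using ji by (simp add: V_def)
    finally show "(Mg p g * V) $$ (j,i) = (V * D) $$ (j,i)" .
  qed (use Mc Vc Dc in auto)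
  have dV: "Determinant.det V \<noteq> 0"
  proof
    assume "Determinant.det V = 0"
    hence "Determinant.det (transpose_mat V) = 0" using det_transpose[OF Vc] by simp
    then obtain w where w: "w \<in> carrier_vec e" "w \<noteq> 0\<^sub>v e" "transpose_mat V *\<^sub>v w = 0\<^sub>v e"
      using det_0_iff_vec_prod_zero[of "transpose_mat V" e] Vc by auto
    define h where "h = (\<Sum>k<e. monom (w $ k) k)"
    have ch: "coeff h k = (if k < e then w $ k else 0)" for k
      by (simp add: h_def coeff_sum coeff_monom)
    have hr: "poly h (rr i) = 0" if i: "i < e" for i
    proof -
      have "poly h (rr i) = (\<Sum>k<e. w $ k * rr i ^ k)" by (simp add: h_def poly_sum poly_monom)
      also have "\<dots> = (transpose_mat V *\<^sub>v w) $ i"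
        using i w(1) by (simp add: V_def scalar_prod_def row_def atLeast0LessThan mult.commute)
      finally show ?thesis using w(3) i by simp
    qed
    have "h = 0"
    proof (rule ccontr)
      assume h0: "h \<noteq> 0"
      have "coeff h (degree h) \<noteq> 0" using h0 by simp
      hence dh: "degree h < e" using ch[of "degree h"] by (auto split: if_splits)
      have "R \<subseteq> {x. poly h x = 0}"
      proof
        fix x assume "x \<in> R"
        then obtain i where "i < e" "x = rr i" using rr unfolding bij_betw_def by auto
        thus "x \<in> {x. poly h x = 0}" using hr by simp
      qed
      hence c1: "card R \<le> card {x. poly h x = 0}" using poly_roots_finite[OF h0] by (rule card_mono[rotated])
      have c2: "card R = e" using card unfolding R_def e_def .
      show False using c1 c2 card_poly_roots_bound[OF h0] dh by linarith
    qed
    have "\<forall>k<e. w $ k = 0"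
    proof (intro allI impI)
      fix k assume "k < e"
      hence "w $ k = coeff h k" using ch[of k] by simp
      thus "w $ k = 0" using \<open>h = 0\<close> by simp
    qed
    hence "w = 0\<^sub>v e" using w(1) by (intro eq_vecI) auto
    thus False using w(2) by simp
  qed
  have e1: "Determinant.det (Mg p g * V) = Determinant.det (Mg p g) * Determinant.det V" by (rule det_mult[OF Mc Vc])
  have e2: "Determinant.det (V * D) = Determinant.det V * Determinant.det D" by (rule det_mult[OF Vc Dc])
  have "Determinant.det (Mg p g) * Determinant.det V = Determinant.det (V * D)" using e1 MV by simp
  also have "\<dots> = Determinant.det D * Determinant.det V" using e2 by (simp add: mult.commute)
  finally have "Determinant.det (Mg p g) * Determinant.det V = Determinant.det D * Determinant.det V" .
  hence "Determinant.det (Mg p g) = Determinant.det D" using dV by simp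
  also have "\<dots> = (\<Prod>i<e. poly g (rr i))" by (simp add: D_def det_mat_diag)
  also have "\<dots> = (\<Prod>r\<in>R. poly g r)"
    using prod.reindex_bij_betw[OF rr, of "poly g"] by (simp add: atLeast0LessThan)
  finally show ?thesis unfolding R_def .
qed



definition minp :: "complex set \<Rightarrow> complex \<Rightarrow> complex poly \<Rightarrow> bool" where
  "minp L \<beta> \<mu> \<longleftrightarrow> polyL L \<mu> \<and> lead_coeff \<mu> = 1 \<and> poly \<mu> \<beta> = 0 \<and>
     (\<forall>g. polyL L g \<longrightarrow> g \<noteq> 0 \<longrightarrow> poly g \<beta> = 0 \<longrightarrow> degree \<mu> \<le> degree g)"

lemma divL:
  assumes sf: "subfield_C L" and mu: "polyL L \<mu>" and lc: "lead_coeff \<mu> = 1"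
  shows "polyL L p \<Longrightarrow> \<exists>q r. polyL L q \<and> polyL L r \<and> p = q * \<mu> + r \<and> (r = 0 \<or> degree r < degree \<mu>)"
proof (induction "degree p" arbitrary: p rule: less_induct)
  case less
  show ?case
  proof (cases "p = 0 \<or> degree p < degree \<mu>")
    case True
    thus ?thesis using less.prems polyL_0[OF sf] by (intro exI[of _ 0] exI[of _ p]) auto
  next
    case False
    hence p0: "p \<noteq> 0" and dmp: "degree \<mu> \<le> degree p" by auto
    define k where "k = degree p - degree \<mu>"
    define m where "m = monom (lead_coeff p) k"
    define p' where "p' = p - m * \<mu>"
    have lpL: "lead_coeff p \<in> L" using less.prems by (simp add: polyL_def)
    have mL: "polyL L m" unfolding m_def by (rule polyL_monom[OF sf lpL])
    have p'L: "polyL L p'" unfolding p'_def by (intro polyL_diff[OF sf] polyL_mult[OF sf] less.prems mL mu)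
    have c: "coeff p' (degree p) = 0"
    proof -
      have "coeff (m * \<mu>) (degree p) = lead_coeff p * coeff \<mu> (degree p - k)"
        using dmp by (simp add: m_def coeff_monom_mult k_def)
      also have "degree p - k = degree \<mu>" using dmp by (simp add: k_def)
      finally show ?thesis using lc by (simp add: p'_def)
    qed
    have dm: "degree (m * \<mu>) \<le> degree p"
    proof -
      have "degree (m * \<mu>) \<le> degree m + degree \<mu>" by (rule degree_mult_le)
      also have "degree m \<le> k" unfolding m_def by (rule degree_monom_le)
      hence "degree m + degree \<mu> \<le> degree p" using dmp by (simp add: k_def)
      finally show ?thesis .
    qed
    have dle: "degree p' \<le> degree p" unfolding p'_def by (rule degree_diff_le) (auto simp: dm)
    show ?thesis
    proof (cases "p' = 0")
      case True
      hence "p = m * \<mu> + 0" by (simp add: p'_def)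
      thus ?thesis using mL polyL_0[OF sf] by blast
    next
      case False
      hence "coeff p' (degree p') \<noteq> 0" by simp
      hence "degree p' \<noteq> degree p" using c by metis
      hence "degree p' < degree p" using dle by simp
      from less.hyps[OF this p'L] obtain q r where qr: "polyL L q" "polyL L r" "p' = q * \<mu> + r"
        "r = 0 \<or> degree r < degree \<mu>" by blast
      have "p = (q + m) * \<mu> + r" using qr(3) by (simp add: p'_def algebra_simps)
      thus ?thesis using qr polyL_add[OF sf qr(1) mL] by blast
    qed
  qed
qed

lemma minp_exists:
  assumes sf: "subfield_C L" and h: "polyL L h" "h \<noteq> 0" "poly h \<beta> = 0"
  shows "\<exists>\<mu>. minp L \<beta> \<mu>"
proof -
  define P where "P n \<longleftrightarrow> (\<exists>g. polyL L g \<and> g \<noteq> 0 \<and> poly g \<beta> = 0 \<and> degree g = n)" for n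
  have "P (degree h)" using h unfolding P_def by blast
  hence "P (LEAST n. P n)" by (rule LeastI)
  then obtain g where g: "polyL L g" "g \<noteq> 0" "poly g \<beta> = 0" "degree g = (LEAST n. P n)"
    unfolding P_def by blast
  define \<mu> where "\<mu> = Polynomial.smult (inverse (lead_coeff g)) g"
  have lg1: "lead_coeff g \<in> L" using g(1) by (simp add: polyL_def)
  have lg2: "lead_coeff g \<noteq> 0" using g(2) by simp
  note lg = lg1 lg2
  have "polyL L \<mu>" unfolding \<mu>_def by (rule polyL_smult[OF sf sf_inverse[OF sf lg(1)] g(1)])
  moreover have "lead_coeff \<mu> = 1" using lg by (simp add: \<mu>_def)
  moreover have "poly \<mu> \<beta> = 0" using g by (simp add: \<mu>_def)
  moreover have "degree \<mu> = degree g" using lg by (simp add: \<mu>_def)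
  moreover have "\<forall>f. polyL L f \<longrightarrow> f \<noteq> 0 \<longrightarrow> poly f \<beta> = 0 \<longrightarrow> degree g \<le> degree f"
    using g(4) by (auto simp: P_def intro: Least_le)
  ultimately show ?thesis unfolding minp_def by metis
qed



definition gen_set :: "complex set \<Rightarrow> complex \<Rightarrow> complex set" where
  "gen_set L \<beta> = {poly g \<beta> | g. polyL L g}"

lemma coeff_sum_monom: "finite J \<Longrightarrow> coeff (\<Sum>j\<in>J. monom (c j) j) k = (if k \<in> J then c k else 0)"
  by (simp add: coeff_sum coeff_monom)

lemma poly_sum_monom: "poly (\<Sum>j\<in>J. monom (c j) j) x = (\<Sum>j\<in>J. c j * x ^ j :: complex)"
  by (simp add: poly_sum Polynomial.poly_monom)

context fixes L \<beta> \<mu> assumes sf: "subfield_C L" and mp: "minp L \<beta> \<mu>" begin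

lemma mp_L: "polyL L \<mu>" and mp_lc: "lead_coeff \<mu> = 1" and mp_root: "poly \<mu> \<beta> = 0"
  and mp_min: "polyL L g \<Longrightarrow> g \<noteq> 0 \<Longrightarrow> poly g \<beta> = 0 \<Longrightarrow> degree \<mu> \<le> degree g"
  using mp by (auto simp: minp_def)

lemma mp_deg: "degree \<mu> > 0"
proof (rule ccontr)
  assume "\<not> degree \<mu> > 0"
  hence "poly \<mu> \<beta> = 1" using mp_lc by (simp add: poly_altdef)
  thus False using mp_root by simp
qed

lemma mp_zero: "polyL L g \<Longrightarrow> poly g \<beta> = 0 \<Longrightarrow> g = 0 \<or> degree g < degree \<mu> \<Longrightarrow> g = 0"
  using mp_min[of g] by fastforce

lemma mp_reduce: "polyL L g \<Longrightarrow> \<exists>r. polyL L r \<and> (r = 0 \<or> degree r < degree \<mu>) \<and> poly r \<beta> = poly g \<beta>"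
proof -
  assume g: "polyL L g"
  from divL[OF sf mp_L mp_lc g] obtain q r where qr: "polyL L q" "polyL L r" "g = q * \<mu> + r"
    "r = 0 \<or> degree r < degree \<mu>" by blast
  have "poly g \<beta> = poly r \<beta>" using qr(3) mp_root by simp
  thus ?thesis using qr by metis
qed

lemma mp_dvd: "polyL L g \<Longrightarrow> poly g \<beta> = 0 \<Longrightarrow> \<exists>q. polyL L q \<and> g = q * \<mu>"
proof -
  assume g: "polyL L g" "poly g \<beta> = 0"
  from divL[OF sf mp_L mp_lc g(1)] obtain q r where qr: "polyL L q" "polyL L r" "g = q * \<mu> + r"
    "r = 0 \<or> degree r < degree \<mu>" by blast
  have "poly r \<beta> = 0" using qr(3) mp_root g(2) by simp
  hence "r = 0" using mp_zero[OF qr(2)] qr(4) by blast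
  thus ?thesis using qr by auto
qed

lemma mp_span: "polyL L g \<Longrightarrow> \<exists>c. (\<forall>k. c k \<in> L) \<and> poly g \<beta> = (\<Sum>k<degree \<mu>. c k * \<beta> ^ k)"
proof -
  assume g: "polyL L g"
  from mp_reduce[OF g] obtain r where r: "polyL L r" "r = 0 \<or> degree r < degree \<mu>" "poly r \<beta> = poly g \<beta>"
    by blast
  have "poly g \<beta> = (\<Sum>k<degree \<mu>. coeff r k * \<beta> ^ k)" using r(3) poly_as_sum_less[OF r(2)] by simp
  thus ?thesis using r(1) by (auto simp: polyL_def)
qed

lemma S_add: "x \<in> gen_set L \<beta> \<Longrightarrow> y \<in> gen_set L \<beta> \<Longrightarrow> x + y \<in> gen_set L \<beta>"
proof -
  assume "x \<in> gen_set L \<beta>" "y \<in> gen_set L \<beta>"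
  then obtain g h where gh: "polyL L g" "x = poly g \<beta>" "polyL L h" "y = poly h \<beta>" unfolding gen_set_def by blast
  have "x + y = poly (g + h) \<beta>" using gh by simp
  thus ?thesis unfolding gen_set_def using polyL_add[OF sf gh(1,3)] by blast
qed
lemma S_mult: "x \<in> gen_set L \<beta> \<Longrightarrow> y \<in> gen_set L \<beta> \<Longrightarrow> x * y \<in> gen_set L \<beta>"
proof -
  assume "x \<in> gen_set L \<beta>" "y \<in> gen_set L \<beta>"
  then obtain g h where gh: "polyL L g" "x = poly g \<beta>" "polyL L h" "y = poly h \<beta>" unfolding gen_set_def by blast
  have "x * y = poly (g * h) \<beta>" using gh by simp
  thus ?thesis unfolding gen_set_def using polyL_mult[OF sf gh(1,3)] by blast
qed
lemma S_uminus: "x \<in> gen_set L \<beta> \<Longrightarrow> - x \<in> gen_set L \<beta>"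
proof -
  assume "x \<in> gen_set L \<beta>"
  then obtain g where gh: "polyL L g" "x = poly g \<beta>" unfolding gen_set_def by blast
  have "- x = poly (- g) \<beta>" using gh by simp
  thus ?thesis unfolding gen_set_def using polyL_uminus[OF sf gh(1)] by blast
qed
lemma S_L: "x \<in> L \<Longrightarrow> x \<in> gen_set L \<beta>"
proof -
  assume x: "x \<in> L"
  have "x = poly [:x:] \<beta>" by simp
  thus ?thesis unfolding gen_set_def using polyL_const[OF sf x] by blast
qed
lemma S_beta: "\<beta> \<in> gen_set L \<beta>"
proof -
  have "\<beta> = poly [:0,1:] \<beta>" by simp
  thus ?thesis unfolding gen_set_def using polyL_x[OF sf] by blast
qed
lemma S_poly: "polyL L p \<Longrightarrow> x \<in> gen_set L \<beta> \<Longrightarrow> poly p x \<in> gen_set L \<beta>"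
proof (induction p)
  case 0 thus ?case using S_L[OF sf_0[OF sf]] by simp
next
  case (pCons a p)
  hence "a \<in> L" "polyL L p" by (auto simp: polyL_pCons)
  thus ?case using pCons by (simp add: S_add S_mult S_L)
qed

lemma S_inverse: "y \<in> gen_set L \<beta> \<Longrightarrow> inverse y \<in> gen_set L \<beta>"
proof (cases "y = 0")
  case True thus ?thesis using S_L[OF sf_0[OF sf]] by simp
next
  case False
  assume y: "y \<in> gen_set L \<beta>"
  then obtain g where g: "polyL L g" "y = poly g \<beta>" unfolding gen_set_def by blast
  define e where "e = degree \<mu>"
  have "\<forall>j. \<exists>c. (\<forall>k. c k \<in> L) \<and> y ^ j = (\<Sum>k<e. c k * \<beta> ^ k)"
  proof
    fix j
    have "y ^ j = poly (g ^ j) \<beta>" using g by (simp add: poly_power)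
    thus "\<exists>c. (\<forall>k. c k \<in> L) \<and> y ^ j = (\<Sum>k<e. c k * \<beta> ^ k)"
      using mp_span[OF polyL_power[OF sf g(1)]] unfolding e_def by metis
  qed
  then obtain a where a: "\<And>j k. a j k \<in> L" "\<And>j. y ^ j = (\<Sum>k<e. a j k * \<beta> ^ k)" by metis
  have "\<exists>c. (\<forall>j\<in>{0..e}. c j \<in> L) \<and> (\<exists>j\<in>{0..e}. c j \<noteq> 0) \<and> (\<forall>k<e. (\<Sum>j\<in>{0..e}. c j * a j k) = 0)"
    by (rule lin_dep[OF sf]) (auto simp: a(1))
  then obtain c where c: "\<forall>j\<in>{0..e}. c j \<in> L" "\<exists>j\<in>{0..e}. c j \<noteq> 0"
    "\<forall>k<e. (\<Sum>j\<in>{0..e}. c j * a j k) = 0" by blast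
  define h where "h = (\<Sum>j\<in>{0..e}. monom (c j) j)"
  have hL: "polyL L h" unfolding h_def using c(1) by (intro polyL_sum[OF sf] polyL_monom[OF sf]) auto
  have h0: "h \<noteq> 0"
  proof
    assume "h = 0"
    obtain j where j: "j \<in> {0..e}" "c j \<noteq> 0" using c(2) by blast
    have "coeff h j = c j" unfolding h_def using j by (simp add: coeff_sum_monom)
    thus False using \<open>h = 0\<close> j by simp
  qed
  have "poly h y = (\<Sum>j\<in>{0..e}. c j * y ^ j)" by (simp add: h_def poly_sum_monom)
  also have "\<dots> = (\<Sum>j\<in>{0..e}. \<Sum>k<e. c j * a j k * \<beta> ^ k)"
    by (simp add: a(2) sum_distrib_left mult.assoc)
  also have "\<dots> = (\<Sum>k<e. (\<Sum>j\<in>{0..e}. c j * a j k) * \<beta> ^ k)"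
    by (subst sum.swap) (simp add: sum_distrib_right)
  also have "\<dots> = 0" using c(3) by simp
  finally have hy: "poly h y = 0" .
  from minp_exists[OF sf hL h0 hy] obtain \<nu> where nu: "minp L y \<nu>" by blast
  hence nuL: "polyL L \<nu>" and nulc: "lead_coeff \<nu> = 1" and nur: "poly \<nu> y = 0"
    and numin: "\<And>g. polyL L g \<Longrightarrow> g \<noteq> 0 \<Longrightarrow> poly g y = 0 \<Longrightarrow> degree \<nu> \<le> degree g"
    by (auto simp: minp_def)
  obtain a0 \<nu>' where nu': "\<nu> = pCons a0 \<nu>'" by (cases \<nu>) auto
  have a0L: "a0 \<in> L" and nu'L: "polyL L \<nu>'" using nuL nu' by (auto simp: polyL_pCons)
  have a0: "a0 \<noteq> 0"
  proof
    assume "a0 = 0"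
    have n0: "\<nu>' \<noteq> 0" using nulc nu' \<open>a0 = 0\<close> by auto
    have "y * poly \<nu>' y = 0" using nur nu' \<open>a0 = 0\<close> by simp
    hence "poly \<nu>' y = 0" using False by simp
    from numin[OF nu'L n0 this] have "degree \<nu> \<le> degree \<nu>'" .
    moreover have "degree \<nu> = Suc (degree \<nu>')" using nu' n0 by simp
    ultimately show False by simp
  qed
  have "a0 + y * poly \<nu>' y = 0" using nur nu' by simp
  hence yp: "y * poly \<nu>' y = - a0" by (simp add: eq_neg_iff_add_eq_0 add.commute)
  have "y * (- inverse a0 * poly \<nu>' y) = - inverse a0 * (y * poly \<nu>' y)" by (simp add: mult_ac)
  also have "\<dots> = 1" using a0 yp by simp
  finally have "y * (- inverse a0 * poly \<nu>' y) = 1" .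
  hence "inverse y = - inverse a0 * poly \<nu>' y" by (rule inverse_unique)
  moreover have "- inverse a0 * poly \<nu>' y \<in> gen_set L \<beta>"
    by (intro S_mult S_L S_poly[OF nu'L y] sf_uminus[OF sf] sf_inverse[OF sf a0L])
  ultimately show ?thesis by simp
qed

lemma S_subfield: "subfield_C (gen_set L \<beta>)"
  unfolding subfield_C_def using S_L[OF sf_0[OF sf]] S_L[OF sf_1[OF sf]]
  by (auto intro: S_add S_mult S_uminus S_inverse)

lemma adjoin_eq: "adjoin L \<beta> = gen_set L \<beta>"
proof
  show "adjoin L \<beta> \<subseteq> gen_set L \<beta>"
    unfolding adjoin_def using S_subfield S_L S_beta by (intro Inter_lower) auto
  show "gen_set L \<beta> \<subseteq> adjoin L \<beta>"
  proof
    fix x assume "x \<in> gen_set L \<beta>"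
    then obtain g where g: "polyL L g" "x = poly g \<beta>" unfolding gen_set_def by blast
    show "x \<in> adjoin L \<beta>" unfolding adjoin_def
    proof
      fix M assume "M \<in> {M. subfield_C M \<and> L \<subseteq> M \<and> \<beta> \<in> M}"
      hence M: "subfield_C M" "L \<subseteq> M" "\<beta> \<in> M" by auto
      show "x \<in> M" using polyL_poly[OF M(1) polyL_mono[OF M(2) g(1)] M(3)] g(2) by simp
    qed
  qed
qed

lemma adjoin_subfield: "subfield_C (adjoin L \<beta>)"
  using S_subfield adjoin_eq by simp

lemma L_sub_adjoin: "L \<subseteq> adjoin L \<beta>" and beta_adjoin: "\<beta> \<in> adjoin L \<beta>"
  using S_L S_beta adjoin_eq by auto

lemma ext_deg: "ext_degree (adjoin L \<beta>) L = degree \<mu>"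
  unfolding ext_degree_def
proof (rule Least_equality)
  define e where "e = degree \<mu>"
  show "\<exists>b. (\<forall>i<degree \<mu>. b i \<in> adjoin L \<beta>) \<and>
      adjoin L \<beta> \<subseteq> {\<Sum>i<degree \<mu>. c i * b i | c. \<forall>i<degree \<mu>. c i \<in> L}"
  proof (intro exI[of _ "\<lambda>i. \<beta> ^ i"] conjI allI impI subsetI)
    fix i show "\<beta> ^ i \<in> adjoin L \<beta>"
      using adjoin_subfield beta_adjoin by (simp add: sf_power)
  next
    fix x assume "x \<in> adjoin L \<beta>"
    then obtain g where g: "polyL L g" "x = poly g \<beta>" unfolding adjoin_eq gen_set_def by blast
    from mp_span[OF g(1)] g(2) show "x \<in> {\<Sum>i<degree \<mu>. c i * \<beta> ^ i | c. \<forall>i<degree \<mu>. c i \<in> L}"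
      by blast
  qed
next
  fix n :: nat assume "\<exists>b. (\<forall>i<n. b i \<in> adjoin L \<beta>) \<and> adjoin L \<beta> \<subseteq> {\<Sum>i<n. c i * b i | c. \<forall>i<n. c i \<in> L}"
  then obtain b where b: "\<forall>i<n. b i \<in> adjoin L \<beta>"
    "adjoin L \<beta> \<subseteq> {\<Sum>i<n. c i * b i | c. \<forall>i<n. c i \<in> L}" by blast
  show "degree \<mu> \<le> n"
  proof (rule ccontr)
    assume "\<not> degree \<mu> \<le> n"
    hence ne: "n < degree \<mu>" by simp
    have "\<forall>j. \<exists>c. (\<forall>i<n. c i \<in> L) \<and> \<beta> ^ j = (\<Sum>i<n. c i * b i)"
    proof
      fix j
      have "\<beta> ^ j \<in> adjoin L \<beta>" using adjoin_subfield beta_adjoin by (simp add: sf_power)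
      thus "\<exists>c. (\<forall>i<n. c i \<in> L) \<and> \<beta> ^ j = (\<Sum>i<n. c i * b i)" using b(2) by blast
    qed
    then obtain cc where cc: "\<And>j i. i < n \<Longrightarrow> cc j i \<in> L" "\<And>j. \<beta> ^ j = (\<Sum>i<n. cc j i * b i)" by metis
    have "\<exists>d. (\<forall>j\<in>{0..<degree \<mu>}. d j \<in> L) \<and> (\<exists>j\<in>{0..<degree \<mu>}. d j \<noteq> 0) \<and>
        (\<forall>i<n. (\<Sum>j\<in>{0..<degree \<mu>}. d j * cc j i) = 0)"
      by (rule lin_dep[OF sf]) (use ne cc(1) in auto)
    then obtain d where d: "\<forall>j\<in>{0..<degree \<mu>}. d j \<in> L" "\<exists>j\<in>{0..<degree \<mu>}. d j \<noteq> 0"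
      "\<forall>i<n. (\<Sum>j\<in>{0..<degree \<mu>}. d j * cc j i) = 0" by blast
    define h where "h = (\<Sum>j\<in>{0..<degree \<mu>}. monom (d j) j)"
    have hL: "polyL L h" unfolding h_def using d(1) by (intro polyL_sum[OF sf] polyL_monom[OF sf]) auto
    have ch: "coeff h k = (if k \<in> {0..<degree \<mu>} then d k else 0)" for k
      unfolding h_def by (simp add: coeff_sum_monom)
    have h0: "h \<noteq> 0"
    proof
      assume "h = 0"
      obtain j where j: "j \<in> {0..<degree \<mu>}" "d j \<noteq> 0" using d(2) by blast
      thus False using ch[of j] \<open>h = 0\<close> by simp
    qed
    have "poly h \<beta> = (\<Sum>j\<in>{0..<degree \<mu>}. d j * \<beta> ^ j)" by (simp add: h_def poly_sum_monom)
    also have "\<dots> = (\<Sum>j\<in>{0..<degree \<mu>}. \<Sum>i<n. d j * cc j i * b i)"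
      by (simp add: cc(2) sum_distrib_left mult.assoc)
    also have "\<dots> = (\<Sum>i<n. (\<Sum>j\<in>{0..<degree \<mu>}. d j * cc j i) * b i)"
      by (subst sum.swap) (simp add: sum_distrib_right)
    also have "\<dots> = 0" using d(3) by simp
    finally have hb: "poly h \<beta> = 0" .
    have "coeff h (degree h) \<noteq> 0" using h0 by simp
    hence "degree h < degree \<mu>" using ch[of "degree h"] by (auto split: if_splits)
    thus False using mp_zero[OF hL hb] h0 by blast
  qed
qed

end



definition ext_set :: "complex set \<Rightarrow> complex set \<Rightarrow> (complex \<Rightarrow> complex) \<Rightarrow> (complex \<Rightarrow> complex) set" where
  "ext_set K L \<sigma> = {\<rho> \<in> complex_embeddings K. \<forall>x\<in>L. \<rho> x = \<sigma> x}"

lemma restr_emb: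
  assumes sfL: "subfield_C L" and "L \<subseteq> M" "\<rho> \<in> complex_embeddings M"
  shows "(\<lambda>x. if x \<in> L then \<rho> x else 0) \<in> complex_embeddings L"
  using assms sf_add[OF sfL] sf_mult[OF sfL] sf_1[OF sfL] unfolding complex_embeddings_def by (auto simp: subset_iff)

lemma det_in_sf:
  assumes sf: "subfield_C L" and A: "A \<in> carrier_mat n n" and AL: "\<And>i j. i < n \<Longrightarrow> j < n \<Longrightarrow> A $$ (i,j) \<in> L"
  shows "Determinant.det A \<in> L"
  unfolding det_def'[OF A]
proof (intro sf_sum[OF sf] sf_mult[OF sf] sf_of_int[OF sf] sf_prod[OF sf])
  fix p i assume "p \<in> {p. p permutes {0..<n}}" "i \<in> {0..<n}"
  thus "A $$ (i, p i) \<in> L" using AL by (auto simp: permutes_def)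
qed

lemma emb_det:
  assumes sf: "subfield_C L" and emb: "\<sigma> \<in> complex_embeddings L"
    and A: "A \<in> carrier_mat n n" and AL: "\<And>i j. i < n \<Longrightarrow> j < n \<Longrightarrow> A $$ (i,j) \<in> L"
  shows "\<sigma> (Determinant.det A) = Determinant.det (map_mat \<sigma> A)"
proof -
  have pin: "\<And>p i. p permutes {0..<n} \<Longrightarrow> i \<in> {0..<n} \<Longrightarrow> p i < n"
    by (metis atLeastLessThan_iff permutes_in_image)
  have Ap: "\<And>p i. p permutes {0..<n} \<Longrightarrow> i \<in> {0..<n} \<Longrightarrow> A $$ (i, p i) \<in> L"
    using AL pin by auto
  have "\<sigma> (Determinant.det A) = (\<Sum>p\<in>{p. p permutes {0..<n}}. \<sigma> (of_int (sign p) * (\<Prod>i = 0..<n. A $$ (i, p i))))"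
    unfolding det_def'[OF A] using Ap
    by (intro emb_sum[OF sf emb] sf_mult[OF sf] sf_of_int[OF sf] sf_prod[OF sf]) auto
  also have "\<dots> = (\<Sum>p\<in>{p. p permutes {0..<n}}. of_int (sign p) * (\<Prod>i = 0..<n. \<sigma> (A $$ (i, p i))))"
  proof (intro sum.cong refl)
    fix p assume "p \<in> {p. p permutes {0..<n}}"
    hence in1: "\<And>i. i \<in> {0..<n} \<Longrightarrow> A $$ (i, p i) \<in> L" using Ap by auto
    hence in2: "(\<Prod>i = 0..<n. A $$ (i, p i)) \<in> L" by (rule sf_prod[OF sf])
    have "\<sigma> (of_int (sign p) * (\<Prod>i = 0..<n. A $$ (i, p i))) = \<sigma> (of_int (sign p)) * \<sigma> (\<Prod>i = 0..<n. A $$ (i, p i))"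
      by (rule emb_mult[OF sf emb sf_of_int[OF sf] in2])
    also have "\<dots> = of_int (sign p) * (\<Prod>i = 0..<n. \<sigma> (A $$ (i, p i)))"
      using emb_of_int[OF sf emb] emb_prod[OF sf emb, of "{0..<n}" "\<lambda>i. A $$ (i, p i)"] in1 by simp
    finally show "\<sigma> (of_int (sign p) * (\<Prod>i = 0..<n. A $$ (i, p i))) = of_int (sign p) * (\<Prod>i = 0..<n. \<sigma> (A $$ (i, p i)))" .
  qed
  also have "\<dots> = Determinant.det (map_mat \<sigma> A)"
  proof -
    have mA: "map_mat \<sigma> A \<in> carrier_mat n n" using A by simp
    show ?thesis unfolding det_def'[OF mA] using A pin
      by (intro sum.cong refl arg_cong2[where f = "(*)"] prod.cong) auto
  qed
  finally show ?thesis .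
qed

context fixes L \<beta> \<mu> \<sigma> assumes sf: "subfield_C L" and mp: "minp L \<beta> \<mu>"
  and emb: "\<sigma> \<in> complex_embeddings L" begin

abbreviation "K \<equiv> adjoin L \<beta>"

lemma sfK: "subfield_C K" using adjoin_subfield[OF sf mp] .
lemma LK: "L \<subseteq> K" using L_sub_adjoin[OF sf mp] .
lemma bK: "\<beta> \<in> K" using beta_adjoin[OF sf mp] .

lemma ext_map: "\<rho> \<in> ext_set K L \<sigma> \<Longrightarrow> polyL L g \<Longrightarrow> map_poly \<rho> g = map_poly \<sigma> g"
proof (rule poly_eqI)
  fix n assume r: "\<rho> \<in> ext_set K L \<sigma>" and g: "polyL L g"
  have re: "\<rho> \<in> complex_embeddings K" using r by (simp add: ext_set_def)
  show "coeff (map_poly \<rho> g) n = coeff (map_poly \<sigma> g) n"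
    using r g by (simp add: coeff_map_emb[OF sfK re] coeff_map_emb[OF sf emb] ext_set_def polyL_def)
qed

lemma ext_poly: "\<rho> \<in> ext_set K L \<sigma> \<Longrightarrow> polyL L g \<Longrightarrow> \<rho> (poly g \<beta>) = poly (map_poly \<sigma> g) (\<rho> \<beta>)"
proof -
  assume r: "\<rho> \<in> ext_set K L \<sigma>" and g: "polyL L g"
  have re: "\<rho> \<in> complex_embeddings K" using r by (simp add: ext_set_def)
  show ?thesis using emb_poly[OF sfK re LK g bK] ext_map[OF r g] by simp
qed

lemma ext_root: "\<rho> \<in> ext_set K L \<sigma> \<Longrightarrow> poly (map_poly \<sigma> \<mu>) (\<rho> \<beta>) = 0"
proof -
  assume r: "\<rho> \<in> ext_set K L \<sigma>"
  have re: "\<rho> \<in> complex_embeddings K" using r by (simp add: ext_set_def)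
  have "poly (map_poly \<sigma> \<mu>) (\<rho> \<beta>) = \<rho> (poly \<mu> \<beta>)" using ext_poly[OF r mp_L[OF sf mp]] by simp
  also have "\<dots> = 0" using mp_root[OF sf mp] emb_0[OF sfK re] by simp
  finally show ?thesis .
qed

lemma ext_inj: "\<rho>1 \<in> ext_set K L \<sigma> \<Longrightarrow> \<rho>2 \<in> ext_set K L \<sigma> \<Longrightarrow> \<rho>1 \<beta> = \<rho>2 \<beta> \<Longrightarrow> \<rho>1 = \<rho>2"
proof (rule ext)
  fix x assume r: "\<rho>1 \<in> ext_set K L \<sigma>" "\<rho>2 \<in> ext_set K L \<sigma>" "\<rho>1 \<beta> = \<rho>2 \<beta>"
  show "\<rho>1 x = \<rho>2 x"
  proof (cases "x \<in> K")
    case True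
    then obtain g where g: "polyL L g" "x = poly g \<beta>" unfolding adjoin_eq[OF sf mp] gen_set_def by blast
    show ?thesis using ext_poly[OF r(1) g(1)] ext_poly[OF r(2) g(1)] r(3) g(2) by simp
  next
    case False
    thus ?thesis using r emb_out by (auto simp: ext_set_def complex_embeddings_def)
  qed
qed

lemma W: "poly (map_poly \<sigma> \<mu>) r = 0 \<Longrightarrow> polyL L g \<Longrightarrow> poly g \<beta> = 0 \<Longrightarrow> poly (map_poly \<sigma> g) r = 0"
proof -
  assume r: "poly (map_poly \<sigma> \<mu>) r = 0" and g: "polyL L g" "poly g \<beta> = 0"
  from mp_dvd[OF sf mp g] obtain q where q: "polyL L q" "g = q * \<mu>" by blast
  have "map_poly \<sigma> g = map_poly \<sigma> q * map_poly \<sigma> \<mu>"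
    using q map_emb_mult[OF sf emb q(1) mp_L[OF sf mp]] by simp
  thus ?thesis using r by simp
qed

lemma ext_exists: "poly (map_poly \<sigma> \<mu>) r = 0 \<Longrightarrow> \<exists>\<rho>\<in>ext_set K L \<sigma>. \<rho> \<beta> = r"
proof -
  assume r: "poly (map_poly \<sigma> \<mu>) r = 0"
  define G where "G x = (SOME g. polyL L g \<and> poly g \<beta> = x)" for x
  define \<rho> where "\<rho> x = (if x \<in> K then poly (map_poly \<sigma> (G x)) r else 0)" for x
  have key: "\<rho> (poly g \<beta>) = poly (map_poly \<sigma> g) r" if g: "polyL L g" for g
  proof -
    have xK: "poly g \<beta> \<in> K" unfolding adjoin_eq[OF sf mp] gen_set_def using g by blast
    have "\<exists>h. polyL L h \<and> poly h \<beta> = poly g \<beta>" using g by blast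
    hence G: "polyL L (G (poly g \<beta>))" "poly (G (poly g \<beta>)) \<beta> = poly g \<beta>"
      unfolding G_def by (metis (mono_tags, lifting) someI_ex)+
    have "poly (map_poly \<sigma> (g - G (poly g \<beta>))) r = 0"
      by (rule W[OF r polyL_diff[OF sf g G(1)]]) (simp add: G(2))
    hence "poly (map_poly \<sigma> g) r = poly (map_poly \<sigma> (G (poly g \<beta>))) r"
      using map_emb_diff[OF sf emb g G(1)] by simp
    thus ?thesis using xK by (simp add: \<rho>_def)
  qed
  have inK: "x \<in> K \<Longrightarrow> \<exists>g. polyL L g \<and> x = poly g \<beta>" for x
    unfolding adjoin_eq[OF sf mp] gen_set_def by blast
  have "\<rho> \<in> complex_embeddings K"
    unfolding complex_embeddings_def
  proof (intro CollectI conjI ballI allI impI)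
    fix x y assume "x \<in> K" "y \<in> K"
    then obtain g h where gh: "polyL L g" "x = poly g \<beta>" "polyL L h" "y = poly h \<beta>" using inK by blast
    have "\<rho> (x + y) = \<rho> (poly (g + h) \<beta>)" using gh by simp
    also have "\<dots> = poly (map_poly \<sigma> (g + h)) r" by (rule key[OF polyL_add[OF sf gh(1,3)]])
    also have "\<dots> = \<rho> x + \<rho> y" using gh key by (simp add: map_emb_add[OF sf emb])
    finally show "\<rho> (x + y) = \<rho> x + \<rho> y" .
    have "\<rho> (x * y) = \<rho> (poly (g * h) \<beta>)" using gh by simp
    also have "\<dots> = poly (map_poly \<sigma> (g * h)) r" by (rule key[OF polyL_mult[OF sf gh(1,3)]])
    also have "\<dots> = \<rho> x * \<rho> y" using gh key by (simp add: map_emb_mult[OF sf emb])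
    finally show "\<rho> (x * y) = \<rho> x * \<rho> y" .
  next
    have "\<rho> 1 = \<rho> (poly 1 \<beta>)" by simp
    also have "\<dots> = poly (map_poly \<sigma> 1) r" by (rule key[OF polyL_1[OF sf]])
    also have "\<dots> = 1" using emb_1[OF sf emb] by simp
    finally show "\<rho> 1 = 1" .
  next
    fix x assume "x \<notin> K" thus "\<rho> x = 0" by (simp add: \<rho>_def)
  qed
  moreover have "\<forall>x\<in>L. \<rho> x = \<sigma> x"
  proof
    fix x assume x: "x \<in> L"
    have "\<rho> x = \<rho> (poly [:x:] \<beta>)" by simp
    also have "\<dots> = \<sigma> x" using key[OF polyL_const[OF sf x]] by (simp add: map_emb_const[OF sf emb])
    finally show "\<rho> x = \<sigma> x" .
  qed
  moreover have "\<rho> \<beta> = r"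
  proof -
    have "\<rho> \<beta> = \<rho> (poly [:0,1:] \<beta>)" by simp
    also have "\<dots> = r" using key[OF polyL_x[OF sf]] by (simp add: map_emb_x[OF sf emb])
    finally show ?thesis .
  qed
  ultimately show ?thesis unfolding ext_set_def by blast
qed

lemma smu_L: "map_poly \<sigma> \<mu> \<noteq> 0" and smu_deg: "degree (map_poly \<sigma> \<mu>) = degree \<mu>"
  using map_emb_eq_0_iff[OF sf emb mp_L[OF sf mp]] degree_map_emb[OF sf emb mp_L[OF sf mp]] mp_lc[OF sf mp]
  by auto

lemma smu_sqfree: "\<forall>a. \<not> (poly (map_poly \<sigma> \<mu>) a = 0 \<and> poly (pderiv (map_poly \<sigma> \<mu>)) a = 0)"
proof (intro allI notI)
  fix a assume a: "poly (map_poly \<sigma> \<mu>) a = 0 \<and> poly (pderiv (map_poly \<sigma> \<mu>)) a = 0"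
  from ext_exists a obtain \<rho> where r: "\<rho> \<in> ext_set K L \<sigma>" "\<rho> \<beta> = a" by blast
  have re: "\<rho> \<in> complex_embeddings K" using r by (simp add: ext_set_def)
  have dL: "polyL L (pderiv \<mu>)" by (rule polyL_pderiv[OF sf mp_L[OF sf mp]])
  have "\<rho> (poly (pderiv \<mu>) \<beta>) = poly (map_poly \<sigma> (pderiv \<mu>)) a" using ext_poly[OF r(1) dL] r(2) by simp
  also have "\<dots> = 0" using a map_emb_pderiv[OF sf emb mp_L[OF sf mp]] by simp
  finally have "\<rho> (poly (pderiv \<mu>) \<beta>) = 0" .
  moreover have "poly (pderiv \<mu>) \<beta> \<in> K" using polyL_poly[OF sfK polyL_mono[OF LK dL] bK] .
  ultimately have "poly (pderiv \<mu>) \<beta> = 0" using emb_eq_0_iff[OF sfK re] by simp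
  moreover have "degree (pderiv \<mu>) < degree \<mu>" using mp_deg[OF sf mp] by (simp add: degree_pderiv)
  ultimately have "pderiv \<mu> = 0" using mp_zero[OF sf mp dL] by blast
  thus False using mp_deg[OF sf mp] by (simp add: pderiv_eq_0_iff)
qed

lemma card_smu_roots: "card {x. poly (map_poly \<sigma> \<mu>) x = 0} = degree \<mu>"
  using card_roots_sqfree[OF smu_L smu_sqfree] smu_deg by simp

lemma ext_bij: "bij_betw (\<lambda>\<rho>. \<rho> \<beta>) (ext_set K L \<sigma>) {x. poly (map_poly \<sigma> \<mu>) x = 0}"
  unfolding bij_betw_def inj_on_def
  using ext_inj ext_root ext_exists by (auto simp: image_def) blast

lemma card_ext: "card (ext_set K L \<sigma>) = degree \<mu>"
  using bij_betw_same_card[OF ext_bij] card_smu_roots by simp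

lemma finite_ext: "finite (ext_set K L \<sigma>)"
  using bij_betw_finite[OF ext_bij] poly_roots_finite[OF smu_L] by simp

lemma map_emb_mod: "polyL L p \<Longrightarrow> map_poly \<sigma> (p mod \<mu>) = map_poly \<sigma> p mod map_poly \<sigma> \<mu>"
proof -
  assume p: "polyL L p"
  from divL[OF sf mp_L[OF sf mp] mp_lc[OF sf mp] p] obtain q r where qr: "polyL L q" "polyL L r"
    "p = q * \<mu> + r" "r = 0 \<or> degree r < degree \<mu>" by blast
  have "p mod \<mu> = r"
  proof -
    have "p mod \<mu> = (r + q * \<mu>) mod \<mu>" using qr(3) by (simp add: add.commute)
    also have "\<dots> = r mod \<mu>" by (rule mod_mult_self1)
    also have "\<dots> = r" using qr(4) by (auto intro: mod_poly_less)
    finally show ?thesis .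
  qed
  moreover have "map_poly \<sigma> p mod map_poly \<sigma> \<mu> = map_poly \<sigma> r"
  proof -
    have "map_poly \<sigma> p = map_poly \<sigma> r + map_poly \<sigma> q * map_poly \<sigma> \<mu>"
      using qr(3) map_emb_add[OF sf emb polyL_mult[OF sf qr(1) mp_L[OF sf mp]] qr(2)]
        map_emb_mult[OF sf emb qr(1) mp_L[OF sf mp]] by (simp add: add.commute)
    hence "map_poly \<sigma> p mod map_poly \<sigma> \<mu> = map_poly \<sigma> r mod map_poly \<sigma> \<mu>" by simp
    also have "\<dots> = map_poly \<sigma> r"
      using qr(4) degree_map_emb[OF sf emb qr(2)] smu_deg by (auto intro: mod_poly_less)
    finally show ?thesis .
  qed
  ultimately show ?thesis by simp
qed

lemma ext_norm: "polyL L g \<Longrightarrow> (\<Prod>\<rho>\<in>ext_set K L \<sigma>. \<rho> (poly g \<beta>)) = \<sigma> (Determinant.det (Mg \<mu> g))"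
proof -
  assume g: "polyL L g"
  have "(\<Prod>\<rho>\<in>ext_set K L \<sigma>. \<rho> (poly g \<beta>)) = (\<Prod>\<rho>\<in>ext_set K L \<sigma>. poly (map_poly \<sigma> g) (\<rho> \<beta>))"
    using ext_poly[OF _ g] by simp
  also have "\<dots> = (\<Prod>x\<in>{x. poly (map_poly \<sigma> \<mu>) x = 0}. poly (map_poly \<sigma> g) x)"
    using prod.reindex_bij_betw[OF ext_bij, of "poly (map_poly \<sigma> g)"] by simp
  also have "\<dots> = Determinant.det (Mg (map_poly \<sigma> \<mu>) (map_poly \<sigma> g))"
    by (rule det_Mg[symmetric]) (use smu_L card_smu_roots smu_deg in auto)
  also have "Mg (map_poly \<sigma> \<mu>) (map_poly \<sigma> g) = map_mat \<sigma> (Mg \<mu> g)"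
  proof (rule eq_matI)
    fix j k assume jk: "j < dim_row (map_mat \<sigma> (Mg \<mu> g))" "k < dim_col (map_mat \<sigma> (Mg \<mu> g))"
    have pj: "polyL L (monom 1 j * g)" by (intro polyL_mult[OF sf] polyL_monom[OF sf] sf_1[OF sf] g)
    have "map_poly \<sigma> ((monom 1 j * g) mod \<mu>) = (monom 1 j * map_poly \<sigma> g) mod map_poly \<sigma> \<mu>"
      using map_emb_mod[OF pj] map_emb_mult[OF sf emb polyL_monom[OF sf sf_1[OF sf]] g]
      by (simp add: map_emb_monom[OF sf emb] emb_1[OF sf emb])
    hence "coeff ((monom 1 j * map_poly \<sigma> g) mod map_poly \<sigma> \<mu>) k = \<sigma> (coeff ((monom 1 j * g) mod \<mu>) k)"
      by (metis coeff_map_emb[OF sf emb])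
    thus "Mg (map_poly \<sigma> \<mu>) (map_poly \<sigma> g) $$ (j, k) = map_mat \<sigma> (Mg \<mu> g) $$ (j, k)"
      using jk by (simp add: Mg_def smu_deg)
  qed (simp_all add: Mg_def smu_deg)
  also have "Determinant.det (map_mat \<sigma> (Mg \<mu> g)) = \<sigma> (Determinant.det (Mg \<mu> g))"
  proof (rule emb_det[OF sf emb, symmetric])
    show "Mg \<mu> g \<in> carrier_mat (degree \<mu>) (degree \<mu>)" by (simp add: Mg_def)
    fix i j assume "i < degree \<mu>" "j < degree \<mu>"
    have pj: "polyL L (monom 1 i * g)" by (intro polyL_mult[OF sf] polyL_monom[OF sf] sf_1[OF sf] g)
    obtain q r where qr: "polyL L q" "polyL L r" "monom 1 i * g = q * \<mu> + r" "r = 0 \<or> degree r < degree \<mu>"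
      using divL[OF sf mp_L[OF sf mp] mp_lc[OF sf mp] pj] by blast
    have "(monom 1 i * g) mod \<mu> = r"
    proof -
      have "(monom 1 i * g) mod \<mu> = (r + q * \<mu>) mod \<mu>" using qr(3) by (simp add: add.commute)
      also have "\<dots> = r" using qr(4) by (auto intro: mod_poly_less)
      finally show ?thesis .
    qed
    thus "Mg \<mu> g $$ (i, j) \<in> L" using qr(2) \<open>i < degree \<mu>\<close> \<open>j < degree \<mu>\<close>
      by (simp add: Mg_def polyL_def)
  qed
  finally show ?thesis .
qed

end



definition resL :: "complex set \<Rightarrow> (complex \<Rightarrow> complex) \<Rightarrow> complex \<Rightarrow> complex" where
  "resL L \<rho> = (\<lambda>x. if x \<in> L then \<rho> x else 0)"

lemma Mg_det_L:
  assumes sf: "subfield_C L" and mp: "minp L \<beta> \<mu>" and g: "polyL L g"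
  shows "Determinant.det (Mg \<mu> g) \<in> L"
proof (rule det_in_sf[OF sf])
  show "Mg \<mu> g \<in> carrier_mat (degree \<mu>) (degree \<mu>)" by (simp add: Mg_def)
  fix i j assume ij: "i < degree \<mu>" "j < degree \<mu>"
  have pj: "polyL L (monom 1 i * g)" by (intro polyL_mult[OF sf] polyL_monom[OF sf] sf_1[OF sf] g)
  obtain q r where qr: "polyL L q" "polyL L r" "monom 1 i * g = q * \<mu> + r" "r = 0 \<or> degree r < degree \<mu>"
    using divL[OF sf mp_L[OF sf mp] mp_lc[OF sf mp] pj] by blast
  have "(monom 1 i * g) mod \<mu> = r"
  proof -
    have "(monom 1 i * g) mod \<mu> = (r + q * \<mu>) mod \<mu>" using qr(3) by (simp add: add.commute)
    also have "\<dots> = r" using qr(4) by (auto intro: mod_poly_less)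
    finally show ?thesis .
  qed
  thus "Mg \<mu> g $$ (i, j) \<in> L" using qr(2) ij by (simp add: Mg_def polyL_def)
qed

context fixes L \<beta> \<mu> assumes sf: "subfield_C L" and mp: "minp L \<beta> \<mu>" begin

lemma res_emb: "\<rho> \<in> complex_embeddings (adjoin L \<beta>) \<Longrightarrow> resL L \<rho> \<in> complex_embeddings L"
  using restr_emb[OF sf L_sub_adjoin[OF sf mp]] unfolding resL_def by blast

lemma res_ext: "\<rho> \<in> complex_embeddings (adjoin L \<beta>) \<Longrightarrow> \<rho> \<in> ext_set (adjoin L \<beta>) L (resL L \<rho>)"
  by (simp add: ext_set_def resL_def)

lemma ext_res: "\<sigma> \<in> complex_embeddings L \<Longrightarrow> \<rho> \<in> ext_set (adjoin L \<beta>) L \<sigma> \<Longrightarrow> resL L \<rho> = \<sigma>"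
  by (rule ext) (auto simp: resL_def ext_set_def emb_out[OF sf])

lemma fiber_eq: "\<sigma> \<in> complex_embeddings L \<Longrightarrow>
   {\<rho>. \<rho> \<in> complex_embeddings (adjoin L \<beta>) \<and> resL L \<rho> = \<sigma>} = ext_set (adjoin L \<beta>) L \<sigma>"
  using ext_res res_ext by (auto simp: ext_set_def)

lemma emb_union: "complex_embeddings (adjoin L \<beta>) = (\<Union>\<sigma>\<in>complex_embeddings L. ext_set (adjoin L \<beta>) L \<sigma>)"
  using res_emb res_ext by (auto simp: ext_set_def)

lemma finite_emb_adjoin: "finite (complex_embeddings L) \<Longrightarrow> finite (complex_embeddings (adjoin L \<beta>))"
  unfolding emb_union using finite_ext[OF sf mp] by blast

lemma prod_emb_adjoin:
  assumes fin: "finite (complex_embeddings L)"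
  shows "(\<Prod>\<rho>\<in>complex_embeddings (adjoin L \<beta>). f \<rho>) =
    (\<Prod>\<sigma>\<in>complex_embeddings L. \<Prod>\<rho>\<in>ext_set (adjoin L \<beta>) L \<sigma>. f \<rho>)"
proof -
  have "(\<Prod>\<rho>\<in>complex_embeddings (adjoin L \<beta>). f \<rho>) =
     (\<Prod>\<sigma>\<in>complex_embeddings L. prod f {\<rho>. \<rho> \<in> complex_embeddings (adjoin L \<beta>) \<and> resL L \<rho> = \<sigma>})"
    by (rule prod.group[symmetric]) (use finite_emb_adjoin[OF fin] fin res_emb in auto)
  also have "\<dots> = (\<Prod>\<sigma>\<in>complex_embeddings L. \<Prod>\<rho>\<in>ext_set (adjoin L \<beta>) L \<sigma>. f \<rho>)"
    by (intro prod.cong refl) (simp add: fiber_eq)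
  finally show ?thesis .
qed

lemma norm_rat_adjoin:
  assumes fin: "finite (complex_embeddings L)"
    and rat: "\<And>x. x \<in> L \<Longrightarrow> (\<Prod>\<sigma>\<in>complex_embeddings L. \<sigma> x) \<in> \<rat>"
    and x: "x \<in> adjoin L \<beta>"
  shows "(\<Prod>\<rho>\<in>complex_embeddings (adjoin L \<beta>). \<rho> x) \<in> \<rat>"
proof -
  obtain g where g: "polyL L g" "x = poly g \<beta>" using x unfolding adjoin_eq[OF sf mp] gen_set_def by blast
  have "(\<Prod>\<rho>\<in>complex_embeddings (adjoin L \<beta>). \<rho> x) =
     (\<Prod>\<sigma>\<in>complex_embeddings L. \<Prod>\<rho>\<in>ext_set (adjoin L \<beta>) L \<sigma>. \<rho> (poly g \<beta>))"
    using prod_emb_adjoin[OF fin] g(2) by simp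
  also have "\<dots> = (\<Prod>\<sigma>\<in>complex_embeddings L. \<sigma> (Determinant.det (Mg \<mu> g)))"
    by (intro prod.cong refl ext_norm[OF sf mp _ g(1)]) auto
  also have "\<dots> \<in> \<rat>" by (rule rat[OF Mg_det_L[OF sf mp g(1)]])
  finally show ?thesis .
qed

end

definition gen :: "complex set \<Rightarrow> complex set" where
  "gen S = \<Inter> {L. subfield_C L \<and> S \<subseteq> L}"

lemma subfield_Inter: "(\<And>L. L \<in> A \<Longrightarrow> subfield_C L) \<Longrightarrow> subfield_C (\<Inter> A)"
  unfolding subfield_C_def by blast

lemma gen_subfield: "subfield_C (gen S)"
  unfolding gen_def by (rule subfield_Inter) auto

lemma gen_sub: "S \<subseteq> gen S"
  unfolding gen_def by auto

lemma gen_least: "subfield_C M \<Longrightarrow> S \<subseteq> M \<Longrightarrow> gen S \<subseteq> M"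
  unfolding gen_def by auto

lemma Rats_subfield: "subfield_C (\<rat> :: complex set)"
  unfolding subfield_C_def by auto

lemma gen_empty: "gen {} = \<rat>"
proof
  show "gen {} \<subseteq> \<rat>" by (rule gen_least[OF Rats_subfield]) auto
  show "\<rat> \<subseteq> gen {}" using sf_Rats[OF gen_subfield] by auto
qed

lemma gen_insert: "gen (insert b S) = adjoin (gen S) b"
proof
  show "gen (insert b S) \<subseteq> adjoin (gen S) b"
    unfolding adjoin_def
  proof (rule Inter_greatest)
    fix M assume "M \<in> {L. subfield_C L \<and> gen S \<subseteq> L \<and> b \<in> L}"
    hence M: "subfield_C M" "gen S \<subseteq> M" "b \<in> M" by auto
    show "gen (insert b S) \<subseteq> M" using gen_sub[of S] M by (intro gen_least) auto
  qed
  show "adjoin (gen S) b \<subseteq> gen (insert b S)"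
    unfolding adjoin_def
  proof (rule Inter_lower, safe)
    show "subfield_C (gen (insert b S))" by (rule gen_subfield)
    show "b \<in> gen (insert b S)" using gen_sub by blast
    fix x assume "x \<in> gen S"
    moreover have "gen S \<subseteq> gen (insert b S)"
      by (intro gen_least[OF gen_subfield]) (use gen_sub[of "insert b S"] in auto)
    ultimately show "x \<in> gen (insert b S)" by blast
  qed
qed

definition idQ :: "complex \<Rightarrow> complex" where "idQ x = (if x \<in> \<rat> then x else 0)"

lemma emb_Rats_eq: "complex_embeddings \<rat> = {idQ}"
proof
  show "{idQ} \<subseteq> complex_embeddings \<rat>"
    by (auto simp: complex_embeddings_def idQ_def)
  show "complex_embeddings \<rat> \<subseteq> {idQ}"
  proof
    fix \<sigma> assume s: "\<sigma> \<in> complex_embeddings \<rat>"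
    have "\<sigma> = idQ"
      by (rule ext) (auto simp: idQ_def emb_Rats[OF Rats_subfield s] emb_out[OF Rats_subfield s])
    thus "\<sigma> \<in> {idQ}" by simp
  qed
qed

definition alg_Q :: "complex \<Rightarrow> bool" where
  "alg_Q b \<longleftrightarrow> (\<exists>h. polyL \<rat> h \<and> h \<noteq> 0 \<and> poly h b = 0)"

theorem tower:
  assumes "finite S" "\<forall>b\<in>S. alg_Q b"
  shows "finite (complex_embeddings (gen S)) \<and>
    (\<forall>x\<in>gen S. (\<Prod>\<sigma>\<in>complex_embeddings (gen S). \<sigma> x) \<in> \<rat>)"
  using assms
proof (induction S rule: finite_induct)
  case empty
  show ?case unfolding gen_empty emb_Rats_eq by (simp add: idQ_def)
next
  case (insert b S)
  have IH: "finite (complex_embeddings (gen S))" "\<And>x. x \<in> gen S \<Longrightarrow> (\<Prod>\<sigma>\<in>complex_embeddings (gen S). \<sigma> x) \<in> \<rat>"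
    using insert by auto
  obtain h where h: "polyL \<rat> h" "h \<noteq> 0" "poly h b = 0" using insert.prems unfolding alg_Q_def by auto
  have hL: "polyL (gen S) h" using polyL_mono[OF _ h(1)] sf_Rats[OF gen_subfield] by blast
  obtain \<mu> where mp: "minp (gen S) b \<mu>" using minp_exists[OF gen_subfield hL h(2,3)] by blast
  show ?case unfolding gen_insert
    using finite_emb_adjoin[OF gen_subfield mp IH(1)] norm_rat_adjoin[OF gen_subfield mp IH(1) IH(2)] by blast
qed



definition cx :: "(complex \<Rightarrow> real) \<Rightarrow> complex \<Rightarrow> complex" where
  "cx \<rho> = (\<lambda>x. complex_of_real (\<rho> x))"

lemma cx_emb: "\<rho> \<in> real_embeddings M \<Longrightarrow> cx \<rho> \<in> complex_embeddings M"
  by (auto simp: cx_def real_embeddings_def complex_embeddings_def)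

lemma cx_inj: "cx \<rho>1 = cx \<rho>2 \<Longrightarrow> \<rho>1 = \<rho>2"
  by (rule ext) (metis cx_def of_real_eq_iff)

lemma re_emb:
  assumes sf: "subfield_C M" and \<psi>: "\<psi> \<in> complex_embeddings M" and R: "\<forall>x\<in>M. \<psi> x \<in> \<real>"
  shows "(\<lambda>x. Re (\<psi> x)) \<in> real_embeddings M" "cx (\<lambda>x. Re (\<psi> x)) = \<psi>"
proof -
  have e: "\<And>x. complex_of_real (Re (\<psi> x)) = \<psi> x"
  proof -
    fix x show "complex_of_real (Re (\<psi> x)) = \<psi> x"
    proof (cases "x \<in> M")
      case True hence "\<psi> x \<in> \<real>" using R by blast
      thus ?thesis by (rule of_real_Re)
    next
      case False thus ?thesis using emb_out[OF sf \<psi>, of x] by simp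
    qed
  qed
  show "cx (\<lambda>x. Re (\<psi> x)) = \<psi>" by (rule ext) (simp add: cx_def e)
  show "(\<lambda>x. Re (\<psi> x)) \<in> real_embeddings M"
    using \<psi> R unfolding real_embeddings_def complex_embeddings_def by (auto simp: complex_is_Real_iff)
qed

lemma bij_cx:
  assumes sf: "subfield_C M" and tr: "totally_real M"
  shows "bij_betw cx (real_embeddings M) (complex_embeddings M)"
  unfolding bij_betw_def
proof
  show "inj_on cx (real_embeddings M)" using cx_inj by (auto simp: inj_on_def)
  show "cx ` real_embeddings M = complex_embeddings M"
  proof
    show "cx ` real_embeddings M \<subseteq> complex_embeddings M" using cx_emb by blast
    show "complex_embeddings M \<subseteq> cx ` real_embeddings M"
    proof
      fix \<psi> assume \<psi>: "\<psi> \<in> complex_embeddings M"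
      have R: "\<forall>x\<in>M. \<psi> x \<in> \<real>" using tr \<psi> by (auto simp: totally_real_def)
      show "\<psi> \<in> cx ` real_embeddings M" using re_emb[OF sf \<psi> R] by (metis image_eqI)
    qed
  qed
qed

lemma restrict_real_emb:
  assumes sfF: "subfield_C F" and FM: "F \<subseteq> M" and \<rho>: "\<rho> \<in> real_embeddings M"
  shows "restrict_emb \<rho> F \<in> real_embeddings F"
  using \<rho> FM sf_add[OF sfF] sf_mult[OF sfF] sf_1[OF sfF]
  unfolding real_embeddings_def restrict_emb_def by (auto simp: subset_iff)

lemma cx_restrict: "cx (restrict_emb \<rho> F) = resL F (cx \<rho>)"
  by (rule ext) (simp add: cx_def restrict_emb_def resL_def)

lemma real_emb_0: "subfield_C M \<Longrightarrow> \<rho> \<in> real_embeddings M \<Longrightarrow> \<rho> 0 = 0"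
  using emb_0[OF _ cx_emb] by (metis cx_def of_real_eq_0_iff)

lemma real_emb_poly:
  assumes sf: "subfield_C M" and \<rho>: "\<rho> \<in> real_embeddings M" and FM: "F \<subseteq> M"
    and p: "polyL F p" and x: "x \<in> M"
  shows "\<rho> (poly p x) = poly (map_poly (restrict_emb \<rho> F) p) (\<rho> x)"
  using p
proof (induction p)
  case 0 thus ?case using real_emb_0[OF sf \<rho>] by simp
next
  case (pCons a p)
  hence a: "a \<in> F" and pp: "polyL F p" by (auto simp: polyL_pCons)
  have aM: "a \<in> M" using a FM by auto
  have pM: "poly p x \<in> M" using polyL_poly[OF sf polyL_mono[OF FM pp] x] .
  have r0: "restrict_emb \<rho> F 0 = 0" using real_emb_0[OF sf \<rho>] by (simp add: restrict_emb_def)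
  have mp: "map_poly (restrict_emb \<rho> F) (pCons a p) = pCons (restrict_emb \<rho> F a) (map_poly (restrict_emb \<rho> F) p)"
    by (rule Polynomial.map_poly_pCons) (rule r0)
  have add: "\<rho> (a + x * poly p x) = \<rho> a + \<rho> x * \<rho> (poly p x)"
    using \<rho> aM x pM sf_mult[OF sf x pM] unfolding real_embeddings_def by auto
  show ?case using add pCons.IH[OF pp] mp a by (simp add: restrict_emb_def)
qed

lemma Reals_subfield: "subfield_C (\<real> :: complex set)"
  unfolding subfield_C_def by auto

lemma tr_adjoin:
  assumes sf: "subfield_C F" and tr: "totally_real F" and mp: "minp F \<alpha> \<mu>"
    and trQ: "totally_real (adjoin \<rat> \<alpha>)" and QK: "adjoin \<rat> \<alpha> \<subseteq> adjoin F \<alpha>"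
  shows "totally_real (adjoin F \<alpha>)"
  unfolding totally_real_def
proof (intro ballI)
  fix \<psi> x assume \<psi>: "\<psi> \<in> complex_embeddings (adjoin F \<alpha>)" and x: "x \<in> adjoin F \<alpha>"
  have sfK: "subfield_C (adjoin F \<alpha>)" by (rule adjoin_subfield[OF sf mp])
  have FK: "F \<subseteq> adjoin F \<alpha>" by (rule L_sub_adjoin[OF sf mp])
  have aK: "\<alpha> \<in> adjoin F \<alpha>" by (rule beta_adjoin[OF sf mp])
  have aQ: "\<alpha> \<in> adjoin \<rat> \<alpha>" unfolding adjoin_def by auto
  have sfQ: "subfield_C (adjoin \<rat> \<alpha>)" unfolding adjoin_def by (rule subfield_Inter) auto
  have "resL (adjoin \<rat> \<alpha>) \<psi> \<in> complex_embeddings (adjoin \<rat> \<alpha>)"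
    unfolding resL_def by (rule restr_emb[OF sfQ QK \<psi>])
  hence a_real: "\<psi> \<alpha> \<in> \<real>" using trQ aQ unfolding totally_real_def resL_def by force
  have resF: "resL F \<psi> \<in> complex_embeddings F" unfolding resL_def by (rule restr_emb[OF sf FK \<psi>])
  obtain g where g: "polyL F g" "x = poly g \<alpha>" using x unfolding adjoin_eq[OF sf mp] gen_set_def by blast
  have "\<psi> x = poly (map_poly \<psi> g) (\<psi> \<alpha>)" using emb_poly[OF sfK \<psi> FK g(1) aK] g(2) by simp
  moreover have "polyL \<real> (map_poly \<psi> g)"
  proof -
    have "\<And>i. \<psi> (coeff g i) \<in> \<real>"
    proof -
      fix i have "coeff g i \<in> F" using g(1) by (simp add: polyL_def)
      thus "\<psi> (coeff g i) \<in> \<real>" using tr resF unfolding totally_real_def resL_def by force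
    qed
    thus ?thesis by (simp add: polyL_def coeff_map_emb[OF sfK \<psi>])
  qed
  ultimately show "\<psi> x \<in> \<real>" using polyL_poly[OF Reals_subfield _ a_real] by simp
qed

lemma mao_upper:
  assumes "u \<le> x" "x \<le> v"
  shows "\<bar>poly (map_poly \<sigma> P) x\<bar> \<le> max_abs_on \<sigma> P u v"
proof -
  have "compact ((\<lambda>x. \<bar>poly (map_poly \<sigma> P) x\<bar>) ` {u..v})"
    by (intro compact_continuous_image continuous_intros) auto
  hence "bdd_above ((\<lambda>x. \<bar>poly (map_poly \<sigma> P) x\<bar>) ` {u..v})"
    by (intro bounded_imp_bdd_above compact_imp_bounded)
  thus ?thesis unfolding max_abs_on_def using assms by (intro cSUP_upper) auto
qed

lemma mao_pos:
  assumes "u < v" "map_poly \<sigma> P \<noteq> 0"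
  shows "max_abs_on \<sigma> P u v > 0"
proof -
  have "\<not> {u..v} \<subseteq> {x. poly (map_poly \<sigma> P) x = 0}"
    using poly_roots_finite[OF assms(2)] infinite_Icc[OF assms(1)] finite_subset by blast
  then obtain x where x0: "x \<in> {u..v}" "poly (map_poly \<sigma> P) x \<noteq> 0" by blast
  hence x: "u \<le> x" "x \<le> v" "poly (map_poly \<sigma> P) x \<noteq> 0" by auto
  have "0 < \<bar>poly (map_poly \<sigma> P) x\<bar>" using x by simp
  also have "\<dots> \<le> max_abs_on \<sigma> P u v" by (rule mao_upper[OF x(1,2)])
  finally show ?thesis .
qed



lemma nf_gen:
  assumes "number_field F"
  shows "\<exists>B. finite B \<and> F = gen B \<and> (\<forall>b\<in>B. alg_Q b)"
proof -
  from assms obtain B where sfF: "subfield_C F" and B: "finite B" "B \<subseteq> F"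
    "F \<subseteq> {\<Sum>b\<in>B. of_rat (c b) * b | c. True}" unfolding number_field_def by blast
  have FB: "F = gen B"
  proof
    show "gen B \<subseteq> F" by (rule gen_least[OF sfF B(2)])
    show "F \<subseteq> gen B"
    proof
      fix x assume "x \<in> F"
      then obtain c where "x = (\<Sum>b\<in>B. of_rat (c b) * b)" using B(3) by blast
      moreover have "(\<Sum>b\<in>B. of_rat (c b) * b) \<in> gen B"
      proof (intro sf_sum[OF gen_subfield] sf_mult[OF gen_subfield])
        fix b assume "b \<in> B"
        thus "b \<in> gen B" using gen_sub[of B] by blast
        show "of_rat (c b) \<in> gen B" by (rule sf_Rats[OF gen_subfield]) simp
      qed
      ultimately show "x \<in> gen B" by simp
    qed
  qed
  have "\<forall>b\<in>B. alg_Q b"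
  proof
    fix b assume bB: "b \<in> B"
    define n where "n = card B"
    obtain f where f: "bij_betw f {0..<n} B" using ex_bij_betw_nat_finite[OF B(1)] unfolding n_def by blast
    have "\<forall>j. \<exists>c. b ^ j = (\<Sum>x\<in>B. of_rat (c x) * x)"
    proof
      fix j have "b ^ j \<in> F" using bB B(2) by (intro sf_power[OF sfF]) auto
      thus "\<exists>c. b ^ j = (\<Sum>x\<in>B. of_rat (c x) * x)" using B(3) by blast
    qed
    then obtain cc where cc: "\<And>j. b ^ j = (\<Sum>x\<in>B. of_rat (cc j x) * x)" by metis
    define a where "a j k = (of_rat (cc j (f k)) :: complex)" for j k
    have bj: "b ^ j = (\<Sum>k<n. a j k * f k)" for j
    proof -
      have "b ^ j = (\<Sum>x\<in>B. of_rat (cc j x) * x)" by (rule cc)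
      also have "\<dots> = (\<Sum>k\<in>{0..<n}. of_rat (cc j (f k)) * f k)"
        using sum.reindex_bij_betw[OF f, of "\<lambda>x. of_rat (cc j x) * x"] by simp
      finally show ?thesis by (simp add: a_def atLeast0LessThan)
    qed
    have "\<exists>d. (\<forall>j\<in>{0..n}. d j \<in> \<rat>) \<and> (\<exists>j\<in>{0..n}. d j \<noteq> 0) \<and> (\<forall>k<n. (\<Sum>j\<in>{0..n}. d j * a j k) = 0)"
      by (rule lin_dep[OF Rats_subfield]) (auto simp: a_def)
    then obtain d where d: "\<forall>j\<in>{0..n}. d j \<in> \<rat>" "\<exists>j\<in>{0..n}. d j \<noteq> 0"
      "\<forall>k<n. (\<Sum>j\<in>{0..n}. d j * a j k) = 0" by blast
    define h where "h = (\<Sum>j\<in>{0..n}. monom (d j) j)"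
    have hL: "polyL \<rat> h" unfolding h_def using d(1) by (intro polyL_sum[OF Rats_subfield] polyL_monom[OF Rats_subfield]) auto
    have h0: "h \<noteq> 0"
    proof
      assume "h = 0"
      obtain j where j: "j \<in> {0..n}" "d j \<noteq> 0" using d(2) by blast
      have "coeff h j = d j" unfolding h_def using j by (simp add: coeff_sum_monom)
      thus False using \<open>h = 0\<close> j by simp
    qed
    have "poly h b = (\<Sum>j\<in>{0..n}. d j * b ^ j)" by (simp add: h_def poly_sum_monom)
    also have "\<dots> = (\<Sum>j\<in>{0..n}. \<Sum>k<n. d j * a j k * f k)"
      by (simp add: bj sum_distrib_left mult.assoc)
    also have "\<dots> = (\<Sum>k<n. (\<Sum>j\<in>{0..n}. d j * a j k) * f k)"
      by (subst sum.swap) (simp add: sum_distrib_right)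
    also have "\<dots> = 0" using d(3) by simp
    finally show "alg_Q b" unfolding alg_Q_def using hL h0 by blast
  qed
  thus ?thesis using B(1) FB by blast
qed

lemma alg_int_alg_Q: "algebraic_int \<alpha> \<Longrightarrow> alg_Q \<alpha>"
proof -
  assume "algebraic_int \<alpha>"
  then obtain p where p: "lead_coeff p = 1" "\<forall>i. coeff p i \<in> \<int>" "poly p \<alpha> = 0"
    by (auto simp: algebraic_int.simps)
  have "polyL \<rat> p" using p(2) Ints_subset_Rats by (auto simp: polyL_def)
  moreover have "p \<noteq> 0" using p(1) by auto
  ultimately show ?thesis using p(3) unfolding alg_Q_def by blast
qed

lemma emb_alg_int:
  assumes sf: "subfield_C M" and \<psi>: "\<psi> \<in> complex_embeddings M" and x: "x \<in> M" and ai: "algebraic_int x"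
  shows "algebraic_int (\<psi> x)"
proof -
  obtain p where p: "lead_coeff p = 1" "\<forall>i. coeff p i \<in> \<int>" "poly p x = 0"
    using ai by (auto simp: algebraic_int.simps)
  have pQ: "polyL \<rat> p" using p(2) Ints_subset_Rats by (auto simp: polyL_def)
  have QK: "\<rat> \<subseteq> M" using sf_Rats[OF sf] by auto
  have mp: "map_poly \<psi> p = p"
    by (rule poly_eqI) (use pQ in \<open>simp add: coeff_map_emb[OF sf \<psi>] polyL_def emb_Rats[OF sf \<psi>]\<close>)
  have "poly p (\<psi> x) = \<psi> (poly p x)" using emb_poly[OF sf \<psi> QK pQ x] mp by simp
  also have "\<dots> = 0" using p(3) emb_0[OF sf \<psi>] by simp
  finally show ?thesis using p(1,2) by (intro algebraic_int.intros) auto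
qed

lemma alg_int_power: "algebraic_int (x::complex) \<Longrightarrow> algebraic_int (x ^ n)"
  by (induction n) (auto intro: alg_int_mult)

lemma real_emb_nz:
  assumes sf: "subfield_C M" and \<rho>: "\<rho> \<in> real_embeddings M" and x: "x \<in> M" "x \<noteq> 0"
  shows "\<rho> x \<noteq> 0"
  using emb_nz[OF sf cx_emb[OF \<rho>] x] by (simp add: cx_def)



theorem lemma4p3:
  fixes F :: "complex set" and P :: "complex poly" and \<alpha> :: complex
    and a b :: "(complex \<Rightarrow> real) \<Rightarrow> real"
    and m :: nat and s t :: "nat \<Rightarrow> real" and \<tau> :: "nat \<Rightarrow> complex \<Rightarrow> real"
  assumes F: "number_field F" "totally_real F"
    and ab: "\<And>\<sigma>. \<sigma> \<in> real_embeddings F \<Longrightarrow> a \<sigma> < b \<sigma>"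
    and m: "m \<ge> 1"
    and st: "\<And>i. i \<in> {1..m} \<Longrightarrow> s i \<le> t i"
    and P: "P \<noteq> 0" "\<And>i. coeff P i \<in> ring_of_integers F"
    and \<delta>: "(\<Prod>\<sigma>\<in>real_embeddings F. max_abs_on \<sigma> P (a \<sigma>) (b \<sigma>)) < 1"
    and \<alpha>: "totally_real_alg_int \<alpha>"
    and \<tau>: "\<And>i. i \<in> {1..m} \<Longrightarrow> \<tau> i \<in> real_embeddings (adjoin F \<alpha>)"
    and \<tau>_inj: "inj_on \<tau> {1..m}"
    and \<tau>_st: "\<And>i. i \<in> {1..m} \<Longrightarrow> s i \<le> \<tau> i \<alpha> \<and> \<tau> i \<alpha> \<le> t i"
    and \<tau>_ab: "\<And>\<rho>. \<rho> \<in> real_embeddings (adjoin F \<alpha>) - \<tau> ` {1..m} \<Longrightarrow>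
        a (restrict_emb \<rho> F) \<le> \<rho> \<alpha> \<and> \<rho> \<alpha> \<le> b (restrict_emb \<rho> F)"
    and P\<alpha>: "poly P \<alpha> \<noteq> 0"
  shows "1 \<le> ext_degree (adjoin F \<alpha>) F \<and>
    real (ext_degree (adjoin F \<alpha>) F) \<le>
      (ln (\<Prod>i=1..m. max_abs_on (restrict_emb (\<tau> i) F) P (s i) (t i))
       - ln (\<Prod>i=1..m. max_abs_on (restrict_emb (\<tau> i) F) P
                (a (restrict_emb (\<tau> i) F)) (b (restrict_emb (\<tau> i) F))))
      / (- ln (\<Prod>\<sigma>\<in>real_embeddings F. max_abs_on \<sigma> P (a \<sigma>) (b \<sigma>)))"
proof -
  obtain B where B: "finite B" "F = gen B" "\<forall>b\<in>B. alg_Q b" using nf_gen[OF F(1)] by blast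
  have aint: "algebraic_int \<alpha>" and trQ: "totally_real (adjoin \<rat> \<alpha>)"
    using \<alpha> by (auto simp: totally_real_alg_int_def)
  have aQ: "alg_Q \<alpha>" by (rule alg_int_alg_Q[OF aint])
  define K where "K = adjoin F \<alpha>"
  have KB: "K = gen (insert \<alpha> B)" unfolding K_def B(2) gen_insert ..
  have sfF: "subfield_C F" unfolding B(2) by (rule gen_subfield)
  have towF: "finite (complex_embeddings F)" using tower[OF B(1)] B(2,3) by simp
  have towK: "finite (complex_embeddings K)" "\<And>x. x \<in> K \<Longrightarrow> (\<Prod>\<psi>\<in>complex_embeddings K. \<psi> x) \<in> \<rat>"
    using tower[of "insert \<alpha> B"] B(1,3) aQ unfolding KB by auto
  obtain h where h: "polyL \<rat> h" "h \<noteq> 0" "poly h \<alpha> = 0" using aQ unfolding alg_Q_def by blast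
  have hF: "polyL F h" using polyL_mono[OF _ h(1)] sf_Rats[OF sfF] by blast
  obtain \<mu> where mp: "minp F \<alpha> \<mu>" using minp_exists[OF sfF hF h(2,3)] by blast
  define e where "e = degree \<mu>"
  have e_pos: "e > 0" unfolding e_def by (rule mp_deg[OF sfF mp])
  have deg: "ext_degree K F = e" unfolding K_def e_def by (rule ext_deg[OF sfF mp])
  have sfK: "subfield_C K" unfolding K_def by (rule adjoin_subfield[OF sfF mp])
  have FK: "F \<subseteq> K" unfolding K_def by (rule L_sub_adjoin[OF sfF mp])
  have aK: "\<alpha> \<in> K" unfolding K_def by (rule beta_adjoin[OF sfF mp])
  have QK: "adjoin \<rat> \<alpha> \<subseteq> K"
  proof -
    have "adjoin \<rat> \<alpha> = gen {\<alpha>}" using gen_insert[of \<alpha> "{}"] gen_empty by simp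
    also have "\<dots> \<subseteq> K" unfolding KB by (intro gen_least[OF gen_subfield]) (use gen_sub in blast)
    finally show ?thesis .
  qed
  have trK: "totally_real K" unfolding K_def by (rule tr_adjoin[OF sfF F(2) mp trQ QK[unfolded K_def]])
  define E where "E = real_embeddings K"
  define EF where "EF = real_embeddings F"
  have bK: "bij_betw cx E (complex_embeddings K)" unfolding E_def by (rule bij_cx[OF sfK trK])
  have bF: "bij_betw cx EF (complex_embeddings F)" unfolding EF_def by (rule bij_cx[OF sfF F(2)])
  have finE: "finite E" using bij_betw_finite[OF bK] towK(1) by simp
  have finEF: "finite EF" using bij_betw_finite[OF bF] towF by simp
  define res where "res \<rho> = restrict_emb \<rho> F" for \<rho>
  have resE: "\<And>\<rho>. \<rho> \<in> E \<Longrightarrow> res \<rho> \<in> EF"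
    unfolding res_def E_def EF_def by (rule restrict_real_emb[OF sfF FK])
  have fiber: "card {\<rho>\<in>E. res \<rho> = \<sigma>} = e" if \<sigma>: "\<sigma> \<in> EF" for \<sigma>
  proof -
    have c\<sigma>: "cx \<sigma> \<in> complex_embeddings F" using \<sigma> cx_emb unfolding EF_def by blast
    have inj: "inj_on cx {\<rho>\<in>E. res \<rho> = \<sigma>}" using cx_inj by (auto simp: inj_on_def)
    have img: "cx ` {\<rho>\<in>E. res \<rho> = \<sigma>} = ext_set K F (cx \<sigma>)"
    proof
      show "cx ` {\<rho>\<in>E. res \<rho> = \<sigma>} \<subseteq> ext_set K F (cx \<sigma>)"
      proof
        fix \<psi> assume "\<psi> \<in> cx ` {\<rho>\<in>E. res \<rho> = \<sigma>}"
        then obtain \<rho> where r: "\<rho> \<in> E" "res \<rho> = \<sigma>" "\<psi> = cx \<rho>" by blast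
        have "\<psi> \<in> complex_embeddings K" using r cx_emb unfolding E_def by blast
        moreover have "resL F \<psi> = cx \<sigma>" using r cx_restrict[of \<rho> F] unfolding res_def by simp
        ultimately show "\<psi> \<in> ext_set K F (cx \<sigma>)"
          using fiber_eq[OF sfF mp c\<sigma>] unfolding K_def by blast
      qed
      show "ext_set K F (cx \<sigma>) \<subseteq> cx ` {\<rho>\<in>E. res \<rho> = \<sigma>}"
      proof
        fix \<psi> assume "\<psi> \<in> ext_set K F (cx \<sigma>)"
        hence \<psi>: "\<psi> \<in> complex_embeddings K" "resL F \<psi> = cx \<sigma>"
          using fiber_eq[OF sfF mp c\<sigma>] unfolding K_def by blast+
        then obtain \<rho> where r: "\<rho> \<in> E" "\<psi> = cx \<rho>" using bK unfolding bij_betw_def by blast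
        have "cx (res \<rho>) = cx \<sigma>" using \<psi>(2) r(2) cx_restrict[of \<rho> F] unfolding res_def by simp
        hence "res \<rho> = \<sigma>" by (rule cx_inj)
        thus "\<psi> \<in> cx ` {\<rho>\<in>E. res \<rho> = \<sigma>}" using r by blast
      qed
    qed
    have "card {\<rho>\<in>E. res \<rho> = \<sigma>} = card (ext_set K F (cx \<sigma>))"
      using card_image[OF inj] img by simp
    also have "\<dots> = e" unfolding K_def e_def by (rule card_ext[OF sfF mp c\<sigma>])
    finally show ?thesis .
  qed
  have PF: "polyL F P" using P(2) by (auto simp: polyL_def ring_of_integers_def)
  define \<gamma> where "\<gamma> = poly P \<alpha>"
  have \<gamma>K: "\<gamma> \<in> K" unfolding \<gamma>_def by (rule polyL_poly[OF sfK polyL_mono[OF FK PF] aK])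
  have \<gamma>0: "\<gamma> \<noteq> 0" using P\<alpha> by (simp add: \<gamma>_def)
  have \<gamma>int: "algebraic_int \<gamma>"
  proof -
    have "\<gamma> = (\<Sum>i\<le>degree P. coeff P i * \<alpha> ^ i)" by (simp add: \<gamma>_def poly_altdef)
    moreover have "algebraic_int (\<Sum>i\<le>degree P. coeff P i * \<alpha> ^ i)"
    proof (rule alg_int_sum)
      fix i
      have "algebraic_int (coeff P i)" using P(2)[of i] by (simp add: ring_of_integers_def)
      thus "algebraic_int (coeff P i * \<alpha> ^ i)" using alg_int_power[OF aint] by (intro alg_int_mult)
    qed simp
    ultimately show ?thesis by simp
  qed
  define N where "N = (\<Prod>\<rho>\<in>E. \<rho> \<gamma>)"
  have NC: "complex_of_real N = (\<Prod>\<psi>\<in>complex_embeddings K. \<psi> \<gamma>)"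
  proof -
    have "(\<Prod>\<psi>\<in>complex_embeddings K. \<psi> \<gamma>) = (\<Prod>\<rho>\<in>E. cx \<rho> \<gamma>)"
      using prod.reindex_bij_betw[OF bK, of "\<lambda>\<psi>. \<psi> \<gamma>"] by simp
    also have "\<dots> = complex_of_real N" by (simp add: N_def cx_def)
    finally show ?thesis by simp
  qed
  have NQ: "complex_of_real N \<in> \<rat>" unfolding NC by (rule towK(2)[OF \<gamma>K])
  have Nint: "algebraic_int (complex_of_real N)" unfolding NC
    by (intro alg_int_prod towK(1) emb_alg_int[OF sfK _ \<gamma>K \<gamma>int])
  have NZ: "complex_of_real N \<in> \<int>" by (rule rational_algebraic_int_is_int[OF Nint NQ])
  have N0: "N \<noteq> 0" unfolding N_def using finE real_emb_nz[OF sfK _ \<gamma>K \<gamma>0] by (simp add: E_def)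
  have N1: "1 \<le> \<bar>N\<bar>"
  proof -
    obtain k where k: "complex_of_real N = of_int k" using NZ by (auto elim: Ints_cases)
    hence Nk: "N = of_int k" by (metis of_real_eq_iff of_real_of_int_eq)
    hence "k \<noteq> 0" using N0 by auto
    thus ?thesis using Nk by simp
  qed
  define g where "g \<rho> = \<bar>\<rho> \<gamma>\<bar>" for \<rho> :: "complex \<Rightarrow> real"
  define \<delta>' where "\<delta>' \<sigma> = max_abs_on \<sigma> P (a \<sigma>) (b \<sigma>)" for \<sigma>
  have eval: "\<rho> \<gamma> = poly (map_poly (res \<rho>) P) (\<rho> \<alpha>)" if "\<rho> \<in> E" for \<rho>
    unfolding \<gamma>_def res_def using real_emb_poly[OF sfK _ FK PF aK] that by (simp add: E_def)
  have \<delta>pos: "\<delta>' \<sigma> > 0" if \<sigma>: "\<sigma> \<in> EF" for \<sigma>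
  proof -
    have s0: "\<sigma> 0 = 0" using real_emb_0[OF sfF] \<sigma> by (simp add: EF_def)
    have "lead_coeff P \<in> F" "lead_coeff P \<noteq> 0" using PF P(1) by (auto simp: polyL_def)
    hence "\<sigma> (lead_coeff P) \<noteq> 0" using real_emb_nz[OF sfF] \<sigma> by (simp add: EF_def)
    hence "coeff (map_poly \<sigma> P) (degree P) \<noteq> 0" using s0 by (simp add: coeff_map_poly)
    hence "map_poly \<sigma> P \<noteq> 0" by auto
    thus ?thesis unfolding \<delta>'_def using ab \<sigma> by (intro mao_pos) (auto simp: EF_def)
  qed
  define T where "T = \<tau> ` {1..m}"
  have TE: "T \<subseteq> E" using \<tau> by (auto simp: T_def E_def K_def)
  have gpos: "g \<rho> > 0" if "\<rho> \<in> E" for \<rho>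
    using real_emb_nz[OF sfK _ \<gamma>K \<gamma>0] that by (simp add: g_def E_def)
  define A where "A i = max_abs_on (res (\<tau> i)) P (s i) (t i)" for i
  have gA: "g (\<tau> i) \<le> A i" if i: "i \<in> {1..m}" for i
  proof -
    have "\<tau> i \<in> E" using \<tau>[OF i] by (simp add: E_def K_def)
    thus ?thesis unfolding g_def A_def eval[OF \<open>\<tau> i \<in> E\<close>] using \<tau>_st[OF i] by (intro mao_upper) auto
  qed
  have gD: "g \<rho> \<le> \<delta>' (res \<rho>)" if r: "\<rho> \<in> E - T" for \<rho>
  proof -
    have "\<rho> \<in> real_embeddings (adjoin F \<alpha>) - \<tau> ` {1..m}" using r by (simp add: E_def K_def T_def)
    from \<tau>_ab[OF this] show ?thesis unfolding g_def \<delta>'_def eval[of \<rho>] using r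
      by (subst eval) (auto intro!: mao_upper simp: res_def)
  qed
  have Apos: "A i > 0" if "i \<in> {1..m}" for i
  proof -
    have "\<tau> i \<in> E" using TE that unfolding T_def by blast
    thus ?thesis using gA[OF that] gpos[of "\<tau> i"] by linarith
  qed
  define Dl where "Dl = (\<Prod>i=1..m. \<delta>' (res (\<tau> i)))"
  define Al where "Al = (\<Prod>i=1..m. A i)"
  define \<Delta> where "\<Delta> = (\<Prod>\<sigma>\<in>EF. \<delta>' \<sigma>)"
  have Dpos: "Dl > 0" unfolding Dl_def
  proof (intro prod_pos)
    fix i assume "i \<in> {1..m}"
    hence "\<tau> i \<in> E" using TE unfolding T_def by blast
    thus "\<delta>' (res (\<tau> i)) > 0" using \<delta>pos resE by blast
  qed
  have Alpos: "Al > 0" unfolding Al_def using Apos by (intro prod_pos) auto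
  have \<Delta>pos: "\<Delta> > 0" unfolding \<Delta>_def using \<delta>pos by (intro prod_pos) auto
  have \<Delta>1: "\<Delta> < 1" using \<delta> by (simp add: \<Delta>_def \<delta>'_def EF_def)
  have prodT: "(\<Prod>\<rho>\<in>T. f \<rho>) = (\<Prod>i=1..m. f (\<tau> i))" for f :: "_ \<Rightarrow> real"
    unfolding T_def by (rule prod.reindex[OF \<tau>_inj, unfolded comp_def])
  have split: "(\<Prod>\<rho>\<in>E. f \<rho>) = (\<Prod>\<rho>\<in>E - T. f \<rho>) * (\<Prod>\<rho>\<in>T. f \<rho>)" for f :: "_ \<Rightarrow> real"
    by (rule prod.subset_diff[OF TE finE])
  have allE: "(\<Prod>\<rho>\<in>E. \<delta>' (res \<rho>)) = \<Delta> ^ e"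
  proof -
    have "(\<Prod>\<rho>\<in>E. \<delta>' (res \<rho>)) = (\<Prod>\<sigma>\<in>EF. prod (\<lambda>\<rho>. \<delta>' (res \<rho>)) {\<rho>. \<rho> \<in> E \<and> res \<rho> = \<sigma>})"
      by (rule prod.group[symmetric]) (use finE finEF resE in auto)
    also have "\<dots> = (\<Prod>\<sigma>\<in>EF. \<delta>' \<sigma> ^ e)"
    proof (intro prod.cong refl)
      fix \<sigma> assume "\<sigma> \<in> EF"
      have "prod (\<lambda>\<rho>. \<delta>' (res \<rho>)) {\<rho>. \<rho> \<in> E \<and> res \<rho> = \<sigma>} = prod (\<lambda>\<rho>. \<delta>' \<sigma>) {\<rho>. \<rho> \<in> E \<and> res \<rho> = \<sigma>}"
        by (intro prod.cong) auto
      also have "\<dots> = \<delta>' \<sigma> ^ e" using fiber[OF \<open>\<sigma> \<in> EF\<close>] by simp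
      finally show "prod (\<lambda>\<rho>. \<delta>' (res \<rho>)) {\<rho>. \<rho> \<in> E \<and> res \<rho> = \<sigma>} = \<delta>' \<sigma> ^ e" .
    qed
    also have "\<dots> = \<Delta> ^ e" by (simp add: \<Delta>_def prod_power_distrib)
    finally show ?thesis .
  qed
  have restD0: "(\<Prod>\<rho>\<in>E - T. \<delta>' (res \<rho>)) * Dl = \<Delta> ^ e"
    using allE split[of "\<lambda>\<rho>. \<delta>' (res \<rho>)"] prodT[of "\<lambda>\<rho>. \<delta>' (res \<rho>)"]
    by (simp add: Dl_def)
  have restD: "(\<Prod>\<rho>\<in>E - T. \<delta>' (res \<rho>)) = \<Delta> ^ e / Dl"
    using restD0 Dpos by (simp add: eq_divide_eq)
  have main: "1 \<le> Al * (\<Delta> ^ e / Dl)"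
  proof -
    have "1 \<le> \<bar>N\<bar>" by (rule N1)
    also have "\<bar>N\<bar> = (\<Prod>\<rho>\<in>E. g \<rho>)" by (simp add: N_def g_def abs_prod)
    also have "\<dots> = (\<Prod>\<rho>\<in>E - T. g \<rho>) * (\<Prod>i=1..m. g (\<tau> i))" using split prodT by simp
    also have "\<dots> \<le> (\<Prod>\<rho>\<in>E - T. \<delta>' (res \<rho>)) * Al"
    proof (rule mult_mono)
      show "(\<Prod>\<rho>\<in>E - T. g \<rho>) \<le> (\<Prod>\<rho>\<in>E - T. \<delta>' (res \<rho>))"
        using gD by (intro prod_mono) (auto simp: g_def)
      show "(\<Prod>i=1..m. g (\<tau> i)) \<le> Al" unfolding Al_def
        using gA by (intro prod_mono) (auto simp: g_def)
      show "0 \<le> (\<Prod>\<rho>\<in>E - T. \<delta>' (res \<rho>))" using \<delta>pos resE by (intro prod_nonneg) (auto intro: less_imp_le)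
      show "0 \<le> (\<Prod>i=1..m. g (\<tau> i))" by (intro prod_nonneg) (auto simp: g_def)
    qed
    also have "\<dots> = Al * (\<Delta> ^ e / Dl)" using restD by simp
    finally show ?thesis .
  qed
  have "0 \<le> ln (Al * (\<Delta> ^ e / Dl))" using main by simp
  also have "ln (Al * (\<Delta> ^ e / Dl)) = ln Al + real e * ln \<Delta> - ln Dl"
    using Alpos \<Delta>pos Dpos by (simp add: ln_mult ln_div ln_realpow)
  finally have ineq: "real e * (- ln \<Delta>) \<le> ln Al - ln Dl" by simp
  have lnpos: "- ln \<Delta> > 0" using \<Delta>pos \<Delta>1 by simp
  have "real e \<le> (ln Al - ln Dl) / (- ln \<Delta>)"
    unfolding pos_le_divide_eq[OF lnpos] by (rule ineq)
  moreover have "Al = (\<Prod>i=1..m. max_abs_on (restrict_emb (\<tau> i) F) P (s i) (t i))"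
    by (simp add: Al_def A_def res_def)
  moreover have "Dl = (\<Prod>i=1..m. max_abs_on (restrict_emb (\<tau> i) F) P
                (a (restrict_emb (\<tau> i) F)) (b (restrict_emb (\<tau> i) F)))"
    by (simp add: Dl_def \<delta>'_def res_def)
  moreover have "\<Delta> = (\<Prod>\<sigma>\<in>real_embeddings F. max_abs_on \<sigma> P (a \<sigma>) (b \<sigma>))"
    by (simp add: \<Delta>_def \<delta>'_def EF_def)
  ultimately show ?thesis using deg e_pos unfolding K_def by simp
qed

end
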